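(* Let $h$ be a smooth function on a neighborhood of $(0,0)$ whose Taylor expansion at $(0,0)$ is $h(x,y)=a^2x^2+b^2y^2+\sum_{m+n\ge3}h_{m,n}x^my^n$, where $a,b>0$ are linearly independent over $\mathbb{Q}$. Then there is a $C^\infty$ function $\tilde z$ such that $\tilde z_x^2+\tilde z_y^2-h$ vanishes to infinite order at $(0,0)$. *)

theory Defs
  imports "HOL-Analysis.Analysis"
begin

definition pdx :: "(real \<times> real \<Rightarrow> real) \<Rightarrow> real \<times> real \<Rightarrow> real" where
  "pdx f = (\<lambda>(x, y). deriv (\<lambda>t. f (t, y)) x)"

definition pdy :: "(real \<times> real \<Rightarrow> real) \<Rightarrow> real \<times> real \<Rightarrow> real" where
  "pdy f = (\<lambda>(x, y). deriv (\<lambda>t. f (x, t)) y)"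

text \<open>Iterated partial derivative: True means d/dx, False means d/dy;
  the list is applied from its last element to its first.\<close>

fun iter_pd :: "bool list \<Rightarrow> (real \<times> real \<Rightarrow> real) \<Rightarrow> real \<times> real \<Rightarrow> real" where
  "iter_pd [] f = f"
| "iter_pd (d # ds) f = (if d then pdx (iter_pd ds f) else pdy (iter_pd ds f))"

definition smooth_on :: "(real \<times> real) set \<Rightarrow> (real \<times> real \<Rightarrow> real) \<Rightarrow> bool" where
  "smooth_on U f \<longleftrightarrow> open U \<and>
     (\<forall>ds. continuous_on U (iter_pd ds f) \<and>
        (\<forall>x y. (x, y) \<in> U \<longrightarrow>
            (\<lambda>t. iter_pd ds f (t, y)) differentiable (at x) \<and>
            (\<lambda>t. iter_pd ds f (x, t)) differentiable (at y)))"

definition vanishes_to_infinite_order_at :: "(real \<times> real \<Rightarrow> real) \<Rightarrow> real \<times> real \<Rightarrow> bool" where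
  "vanishes_to_infinite_order_at g p \<longleftrightarrow> (\<forall>ds. iter_pd ds g p = 0)"

end

theory Submission
  imports Defs "HOL-Computational_Algebra.Polynomial" "HOL-Library.Nat_Bijection"
begin


fun Dk :: "nat \<Rightarrow> (real \<Rightarrow> real) \<Rightarrow> bool" where
  "Dk 0 f = True"
| "Dk (Suc k) f = ((\<forall>x. f differentiable (at x)) \<and> Dk k (deriv f))"

definition sm1 :: "(real \<Rightarrow> real) \<Rightarrow> bool" where "sm1 f \<longleftrightarrow> (\<forall>k. Dk k f)"

lemma dd: "f differentiable (at x) \<Longrightarrow> (f has_real_derivative deriv f x) (at x)"
  using DERIV_deriv_iff_real_differentiable by blast

lemma DERIV_mult2:
  "(f has_field_derivative Da) (at x) \<Longrightarrow> (g has_field_derivative Db) (at x) \<Longrightarrow>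
    ((\<lambda>x. f x * g x) has_field_derivative Da * g x + f x * Db) (at x)"
  using DERIV_mult[of f Da x UNIV g Db] by (simp add: mult.commute)

lemma Dk_mono: "Dk (Suc k) f \<Longrightarrow> Dk k f"
  by (induction k arbitrary: f) auto

lemma Dk_add: "Dk k f \<Longrightarrow> Dk k g \<Longrightarrow> Dk k (\<lambda>x. f x + g x)"
proof (induction k arbitrary: f g)
  case (Suc k)
  have e: "deriv (\<lambda>x. f x + g x) = (\<lambda>x. deriv f x + deriv g x)"
    using Suc.prems by (intro ext DERIV_imp_deriv DERIV_add dd) auto
  show ?case using Suc by (auto simp: e)
qed auto

lemma Dk_mult: "Dk k f \<Longrightarrow> Dk k g \<Longrightarrow> Dk k (\<lambda>x. f x * g x)"
proof (induction k arbitrary: f g)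
  case (Suc k)
  have e: "deriv (\<lambda>x. f x * g x) = (\<lambda>x. deriv f x * g x + f x * deriv g x)"
    using Suc.prems by (intro ext DERIV_imp_deriv DERIV_mult2 dd) auto
  have "Dk k (\<lambda>x. deriv f x * g x)" using Suc Dk_mono by auto
  moreover have "Dk k (\<lambda>x. f x * deriv g x)" using Suc Dk_mono by auto
  ultimately show ?case using Suc.prems by (auto simp: e intro: Dk_add)
qed auto

lemma Dk_const: "Dk k (\<lambda>x. c)"
  by (induction k arbitrary: c) auto

lemma Dk_id: "Dk k (\<lambda>x. x)"
  by (cases k) (auto simp: Dk_const)

lemma sm1_D: "sm1 f \<Longrightarrow> sm1 (deriv f)"
  unfolding sm1_def using Dk.simps(2) by blast

lemma sm1_diff: "sm1 f \<Longrightarrow> f differentiable (at x)"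
  unfolding sm1_def using Dk.simps(2) by blast

lemma sm1_const: "sm1 (\<lambda>x. c)" by (simp add: sm1_def Dk_const)
lemma sm1_id: "sm1 (\<lambda>x. x)" by (simp add: sm1_def Dk_id)
lemma sm1_add: "sm1 f \<Longrightarrow> sm1 g \<Longrightarrow> sm1 (\<lambda>x. f x + g x)" by (simp add: sm1_def Dk_add)
lemma sm1_mult: "sm1 f \<Longrightarrow> sm1 g \<Longrightarrow> sm1 (\<lambda>x. f x * g x)" by (simp add: sm1_def Dk_mult)

lemma sm1_diff_fun: "sm1 f \<Longrightarrow> sm1 g \<Longrightarrow> sm1 (\<lambda>x. f x - g x)"
proof -
  assume "sm1 f" "sm1 g"
  then have "sm1 (\<lambda>x. f x + (-1) * g x)" by (intro sm1_add sm1_mult sm1_const)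
  then show ?thesis by simp
qed

lemma sm1_power: "sm1 f \<Longrightarrow> sm1 (\<lambda>x. f x ^ n)"
  by (induction n) (auto intro: sm1_mult sm1_const)

lemma Dk_comp: "sm1 g \<Longrightarrow> sm1 f \<Longrightarrow> Dk k (\<lambda>x. f (g x))"
proof (induction k arbitrary: f)
  case (Suc k)
  have e: "deriv (\<lambda>x. f (g x)) = (\<lambda>x. deriv f (g x) * deriv g x)"
    using Suc.prems by (intro ext DERIV_imp_deriv DERIV_chain2[of f] dd sm1_diff) auto
  have "Dk k (\<lambda>x. deriv f (g x))" using Suc sm1_D by auto
  moreover have "Dk k (deriv g)" using Suc.prems sm1_D sm1_def by blast
  ultimately have "Dk k (\<lambda>x. deriv f (g x) * deriv g x)" by (rule Dk_mult)
  moreover have "\<forall>x. (\<lambda>x. f (g x)) differentiable (at x)"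
    using Suc.prems DERIV_chain2[OF dd dd] sm1_diff real_differentiable_def by blast
  ultimately show ?case by (simp add: e)
qed auto

lemma sm1_comp: "sm1 f \<Longrightarrow> sm1 g \<Longrightarrow> sm1 (\<lambda>x. f (g x))"
  by (simp add: sm1_def Dk_comp)

lemma Dk_inv: "sm1 f \<Longrightarrow> (\<forall>x. f x \<noteq> 0) \<Longrightarrow> Dk k (\<lambda>x. inverse (f x))"
proof (induction k)
  case (Suc k)
  have e: "deriv (\<lambda>x. inverse (f x)) = (\<lambda>x. - (inverse (f x) * deriv f x * inverse (f x)))"
    using Suc.prems by (intro ext DERIV_imp_deriv DERIV_inverse' dd sm1_diff) auto
  have d: "Dk k (deriv f)" using Suc.prems sm1_D sm1_def by blast
  have "Dk k (\<lambda>x. (-1) * (inverse (f x) * deriv f x * inverse (f x)))"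
    using Suc d by (intro Dk_mult Dk_const) auto
  moreover have "\<forall>x. (\<lambda>x. inverse (f x)) differentiable (at x)"
    using Suc.prems DERIV_inverse'[OF dd] sm1_diff real_differentiable_def by blast
  ultimately show ?case by (simp add: e)
qed auto

lemma sm1_inv: "sm1 f \<Longrightarrow> (\<forall>x. f x \<noteq> 0) \<Longrightarrow> sm1 (\<lambda>x. inverse (f x))"
  by (simp add: sm1_def Dk_inv)

lemma sm1_higher: "sm1 f \<Longrightarrow> sm1 ((deriv ^^ j) f)"
  by (induction j) (auto intro: sm1_D)

lemma sm1_higher_diff: "sm1 f \<Longrightarrow> ((deriv ^^ j) f) differentiable (at x)"
  using sm1_higher sm1_diff by blast



definition G :: "real poly \<Rightarrow> real \<Rightarrow> real" where
  "G Q t = (if t > 0 then poly Q (inverse t) * exp (- inverse t) else 0)"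

definition NQ :: "real poly \<Rightarrow> real poly" where
  "NQ Q = [:0,0,1:] * (Q - pderiv Q)"

lemma flatlim: fixes Q :: "real poly" shows "((\<lambda>t. poly Q (inverse t) * exp (- inverse t)) \<longlongrightarrow> 0) (at_right 0)"
proof -
  have eq: "(\<lambda>s. poly Q s * exp (- s)) = (\<lambda>s. \<Sum>i\<le>degree Q. coeff Q i * (s^i / exp s))"
  proof (rule ext)
    fix s :: real
    have "poly Q s * exp (- s) = (\<Sum>i\<le>degree Q. coeff Q i * s^i * exp (- s))"
      by (simp add: poly_altdef sum_distrib_right)
    also have "\<dots> = (\<Sum>i\<le>degree Q. coeff Q i * (s^i / exp s))"
      by (intro sum.cong refl) (simp add: exp_minus divide_inverse)
    finally show "poly Q s * exp (- s) = (\<Sum>i\<le>degree Q. coeff Q i * (s^i / exp s))" .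
  qed
  have "((\<lambda>s. \<Sum>i\<le>degree Q. coeff Q i * (s^i / exp s)) \<longlongrightarrow> (\<Sum>i\<le>degree Q. coeff Q i * 0)) at_top"
    by (intro tendsto_sum tendsto_mult tendsto_const tendsto_power_div_exp_0)
  then have "((\<lambda>s. poly Q s * exp (- s)) \<longlongrightarrow> 0) at_top" by (simp add: eq)
  from filterlim_compose[OF this filterlim_inverse_at_top_right] show ?thesis by (simp add: o_def)
qed

lemma G_deriv: "(G Q has_real_derivative G (NQ Q) t) (at t)"
proof -
  consider "t > 0" | "t < 0" | "t = 0" by linarith
  then show ?thesis
  proof cases
    case 1
    have d1: "((\<lambda>t. poly Q (inverse t)) has_real_derivative
        poly (pderiv Q) (inverse t) * (- (inverse t ^ Suc (Suc 0)))) (at t)"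
      by (rule DERIV_chain2[OF poly_DERIV DERIV_inverse]) (use 1 in auto)
    have d2: "((\<lambda>t. exp (- inverse t)) has_real_derivative
        exp (- inverse t) * (- (- (inverse t ^ Suc (Suc 0))))) (at t)"
      by (rule DERIV_chain2[OF DERIV_exp DERIV_minus[OF DERIV_inverse]]) (use 1 in auto)
    have d3: "((\<lambda>t. poly Q (inverse t) * exp (- inverse t)) has_real_derivative G (NQ Q) t) (at t)"
      using DERIV_mult2[OF d1 d2] 1
      by (simp add: G_def NQ_def poly_diff algebra_simps power2_eq_square)
    have ev: "eventually (\<lambda>x. G Q x = poly Q (inverse x) * exp (- inverse x)) (nhds t)"
      using eventually_nhds_in_open[of "{0<..}" t] 1 by (auto simp: G_def elim!: eventually_mono)
    show ?thesis using d3 DERIV_cong_ev[OF refl ev refl] by blast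
  next
    case 2
    have ev: "eventually (\<lambda>x. G Q x = 0) (nhds t)"
      using eventually_nhds_in_open[of "{..<0}" t] 2 by (auto simp: G_def elim!: eventually_mono)
    have "(G Q has_real_derivative 0) (at t) \<longleftrightarrow> ((\<lambda>x. 0::real) has_real_derivative 0) (at t)"
      by (rule DERIV_cong_ev[OF refl ev refl])
    then have "(G Q has_real_derivative 0) (at t)" by simp
    moreover have "G (NQ Q) t = 0" using 2 by (simp add: G_def)
    ultimately show ?thesis by simp
  next
    case 3
    have L: "((\<lambda>y. (G Q y - G Q 0) / (y - 0)) \<longlongrightarrow> 0) (at_left 0)"
    proof -
      have "eventually (\<lambda>y. (G Q y - G Q 0) / (y - 0) = 0) (at_left (0::real))"
        using eventually_at_left_real[of "-1" 0] by (auto simp: G_def elim!: eventually_mono)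
      then show ?thesis by (rule tendsto_eventually)
    qed
    have R: "((\<lambda>y. (G Q y - G Q 0) / (y - 0)) \<longlongrightarrow> 0) (at_right 0)"
    proof -
      have "eventually (\<lambda>y. poly ([:0,1:] * Q) (inverse y) * exp (- inverse y) = (G Q y - G Q 0) / (y - 0)) (at_right (0::real))"
        using eventually_at_right_real[of 0 1] by (auto simp: G_def divide_inverse elim!: eventually_mono)
      then have "((\<lambda>y. poly ([:0,1:] * Q) (inverse y) * exp (- inverse y)) \<longlongrightarrow> 0) (at_right 0) =
          ((\<lambda>y. (G Q y - G Q 0) / (y - 0)) \<longlongrightarrow> 0) (at_right 0)" by (rule tendsto_cong)
      then show ?thesis using flatlim[of "[:0,1:] * Q"] by (rule iffD1)
    qed
    have "((\<lambda>y. (G Q y - G Q 0) / (y - 0)) \<longlongrightarrow> 0) (at 0)"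
      by (rule filterlim_split_at[OF L R])
    then show ?thesis using 3 by (simp add: has_field_derivative_iff G_def)
  qed
qed

lemma G_Dk: "Dk k (G Q)"
proof (induction k arbitrary: Q)
  case (Suc k)
  have e: "deriv (G Q) = G (NQ Q)" by (intro ext DERIV_imp_deriv G_deriv)
  have "\<forall>x. G Q differentiable (at x)" using G_deriv real_differentiable_def by blast
  then show ?case using Suc by (simp add: e)
qed auto

lemma G_sm1: "sm1 (G Q)" by (simp add: sm1_def G_Dk)

definition chi :: "real \<Rightarrow> real" where
  "chi u = G 1 (4 - u*u) * inverse (G 1 (4 - u*u) + G 1 (u*u - 1))"

lemma G1_pos: "t > 0 \<Longrightarrow> G 1 t > 0" by (simp add: G_def)
lemma G1_zero: "t \<le> 0 \<Longrightarrow> G 1 t = 0" by (simp add: G_def)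
lemma G1_nonneg: "G 1 t \<ge> 0" by (simp add: G_def)

lemma chi_sm1: "sm1 chi"
proof -
  have p1: "sm1 (\<lambda>u. 4 - u*u)" by (intro sm1_diff_fun sm1_mult sm1_const sm1_id)
  have p2: "sm1 (\<lambda>u. u*u - 1)" by (intro sm1_diff_fun sm1_mult sm1_const sm1_id)
  have a: "sm1 (\<lambda>u. G 1 (4 - u*u))" by (rule sm1_comp[OF G_sm1 p1])
  have b: "sm1 (\<lambda>u. G 1 (u*u - 1))" by (rule sm1_comp[OF G_sm1 p2])
  have nz: "\<forall>u. G 1 (4 - u*u) + G 1 (u*u - 1) \<noteq> 0"
  proof
    fix u :: real
    show "G 1 (4 - u*u) + G 1 (u*u - 1) \<noteq> 0"
    proof (cases "u*u < 4")
      case True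
      then show ?thesis using G1_pos[of "4 - u*u"] G1_nonneg[of "u*u - 1"] by linarith
    next
      case False
      then show ?thesis using G1_pos[of "u*u - 1"] G1_nonneg[of "4 - u*u"] by linarith
    qed
  qed
  have "sm1 (\<lambda>u. G 1 (4 - u*u) * inverse (G 1 (4 - u*u) + G 1 (u*u - 1)))"
    by (intro sm1_mult a sm1_inv sm1_add b nz)
  then show ?thesis unfolding chi_def[abs_def] .
qed

lemma chi_one: "\<bar>u\<bar> < 1 \<Longrightarrow> chi u = 1"
proof -
  assume u: "\<bar>u\<bar> < 1"
  have "\<bar>u\<bar> * \<bar>u\<bar> \<le> \<bar>u\<bar> * 1" using u by (intro mult_left_mono) auto
  then have "u*u < 1" using u by (simp add: abs_mult_self_eq)
  then have "G 1 (u*u - 1) = 0" "G 1 (4 - u*u) > 0" using G1_zero G1_pos by auto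
  then show ?thesis by (simp add: chi_def)
qed

lemma chi_zero: "\<bar>u\<bar> \<ge> 2 \<Longrightarrow> chi u = 0"
proof -
  assume u: "\<bar>u\<bar> \<ge> 2"
  have "\<bar>u\<bar> * \<bar>u\<bar> \<ge> 2 * 2" using u by (intro mult_mono) auto
  then have "u*u \<ge> 4" by (simp add: abs_mult_self_eq)
  then show ?thesis using G1_zero[of "4 - u*u"] by (simp add: chi_def)
qed

definition rho :: "nat \<Rightarrow> real \<Rightarrow> real" where "rho m u = u^m * chi u"

lemma rho_sm1: "sm1 (rho m)"
  unfolding rho_def[abs_def] by (intro sm1_mult sm1_power sm1_id chi_sm1)

lemma higher_zero_fun: "(deriv ^^ p) (\<lambda>x. 0::real) = (\<lambda>x. 0)"
  by (induction p) auto

lemma rho_higher_out: "\<bar>u\<bar> > 2 \<Longrightarrow> (deriv ^^ p) (rho m) u = 0"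
proof -
  assume u: "\<bar>u\<bar> > 2"
  have o: "open {x::real. 2 < \<bar>x\<bar>}" by (intro open_Collect_less continuous_intros)
  have "eventually (\<lambda>x. rho m x = 0) (nhds u)"
    using eventually_nhds_in_open[OF o, of u] u by (auto simp: rho_def chi_zero elim!: eventually_mono)
  then have "(deriv ^^ p) (rho m) u = (deriv ^^ p) (\<lambda>x. 0) u" by (rule higher_deriv_cong_ev) simp
  then show ?thesis by (simp add: higher_zero_fun)
qed

lemma rho_higher_bounded: "\<exists>B. \<forall>u. \<bar>(deriv ^^ p) (rho m) u\<bar> \<le> B"
proof -
  let ?F = "(deriv ^^ p) (rho m)"
  have c: "continuous_on (cball 0 2) ?F"
    using sm1_higher_diff[OF rho_sm1] differentiable_imp_continuous_within
    by (metis continuous_at_imp_continuous_on)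
  have "bounded (?F ` cball 0 2)" by (rule compact_imp_bounded[OF compact_continuous_image[OF c compact_cball]])
  then obtain B where B: "\<forall>x\<in>cball 0 2. \<bar>?F x\<bar> \<le> B" unfolding bounded_real by auto
  have "\<bar>?F u\<bar> \<le> B" for u
  proof (cases "\<bar>u\<bar> > 2")
    case True
    then show ?thesis using rho_higher_out[OF True] B[rule_format, of 0] by simp
  next
    case False
    then show ?thesis using B by (auto simp: dist_real_def)
  qed
  then show ?thesis by blast
qed

lemma pow_higher: "(deriv ^^ p) (\<lambda>u::real. u^m) = (\<lambda>u. if p \<le> m then fact m / fact (m-p) * u^(m-p) else 0)"
proof (induction p)
  case 0
  then show ?case by simp
next
  case (Suc p)
  show ?case
  proof (cases "p \<le> m")
    case True
    have "(deriv ^^ Suc p) (\<lambda>u::real. u^m) = deriv (\<lambda>u. fact m / fact (m-p) * u^(m-p))"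
      using Suc True by simp
    also have "\<dots> = (\<lambda>u. fact m / fact (m-p) * (real (m-p) * u^(m-p - Suc 0)))"
      by (intro ext DERIV_imp_deriv DERIV_cmult DERIV_pow)
    also have "\<dots> = (\<lambda>u. if Suc p \<le> m then fact m / fact (m - Suc p) * u^(m - Suc p) else 0)"
    proof (cases "Suc p \<le> m")
      case T: True
      have mp: "m - p = Suc (m - Suc p)" using T by simp
      have f: "(fact (m-p)::real) = real (m-p) * fact (m - Suc p)"
        unfolding mp by (simp only: fact_Suc of_nat_mult)
      have nz: "real (m-p) \<noteq> 0" using T by simp
      have e: "m - p - Suc 0 = m - Suc p" by simp
      show ?thesis
      proof (rule ext)
        fix u :: real
        have "fact m / fact (m-p) * (real (m-p) * u^(m-p - Suc 0)) = fact m / fact (m - Suc p) * u^(m - Suc p)"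
          unfolding f e using nz by (simp add: field_simps)
        then show "fact m / fact (m-p) * (real (m-p) * u^(m-p - Suc 0)) =
          (if Suc p \<le> m then fact m / fact (m - Suc p) * u^(m - Suc p) else 0)" using T by simp
      qed
    next
      case False
      then have "m = p" using True by simp
      then show ?thesis by simp
    qed
    finally show ?thesis .
  next
    case False
    then show ?thesis using Suc by simp
  qed
qed

lemma rho_jet: "(deriv ^^ p) (rho m) 0 = (if p = m then fact m else 0)"
proof -
  have o: "open {x::real. \<bar>x\<bar> < 1}" by (intro open_Collect_less continuous_intros)
  have "eventually (\<lambda>x. rho m x = x^m) (nhds 0)"
    using eventually_nhds_in_open[OF o, of 0] by (auto simp: rho_def chi_one elim!: eventually_mono)
  then have "(deriv ^^ p) (rho m) 0 = (deriv ^^ p) (\<lambda>x. x^m) 0" by (rule higher_deriv_cong_ev) simp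
  then show ?thesis by (simp add: pow_higher)
qed

lemma scale_higher: "sm1 f \<Longrightarrow> (deriv ^^ p) (\<lambda>x. a * f (l*x)) = (\<lambda>x. a * l^p * (deriv ^^ p) f (l*x))"
proof (induction p)
  case 0
  then show ?case by simp
next
  case (Suc p)
  have "((\<lambda>x. a * l^p * (deriv ^^ p) f (l*x)) has_real_derivative a * l^p * (deriv ((deriv ^^ p) f) (l*x) * l)) (at x)" for x
    by (rule DERIV_cmult, rule DERIV_chain2[OF dd DERIV_cmult_Id], rule sm1_higher_diff[OF Suc.prems])
  then have d: "deriv (\<lambda>x. a * l^p * (deriv ^^ p) f (l*x)) = (\<lambda>x. a * l^p * (deriv ((deriv ^^ p) f) (l*x) * l))"
    by (intro ext DERIV_imp_deriv)
  have "(deriv ^^ Suc p) (\<lambda>x. a * f (l*x)) = deriv ((deriv ^^ p) (\<lambda>x. a * f (l*x)))" by simp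
  also have "\<dots> = deriv (\<lambda>x. a * l^p * (deriv ^^ p) f (l*x))" by (simp only: Suc.IH[OF Suc.prems])
  also have "\<dots> = (\<lambda>x. a * l^p * (deriv ((deriv ^^ p) f) (l*x) * l))" by (rule d)
  finally show ?case by (simp add: fun_eq_iff algebra_simps)
qed



definition cT :: "bool list \<Rightarrow> nat" where "cT ds = length (filter (\<lambda>d. d) ds)"
definition cF :: "bool list \<Rightarrow> nat" where "cF ds = length (filter Not ds)"

lemma cT_simps[simp]: "cT [] = 0" "cT (d # ds) = (if d then Suc (cT ds) else cT ds)"
  by (auto simp: cT_def)
lemma cF_simps[simp]: "cF [] = 0" "cF (d # ds) = (if d then cF ds else Suc (cF ds))"
  by (auto simp: cF_def)

definition Bd :: "nat \<Rightarrow> nat \<Rightarrow> real" where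
  "Bd m p = (SOME B. \<forall>u. \<bar>(deriv ^^ p) (rho m) u\<bar> \<le> B)"

lemma Bd: "\<bar>(deriv ^^ p) (rho m) u\<bar> \<le> Bd m p"
  using someI_ex[OF rho_higher_bounded[of p m]] unfolding Bd_def by blast

lemma Bd_nonneg: "0 \<le> Bd m p" using Bd[of p m 0] by linarith

definition dm :: "nat \<Rightarrow> nat" where "dm k = fst (prod_decode k)"
definition dn :: "nat \<Rightarrow> nat" where "dn k = snd (prod_decode k)"

definition KK :: "nat \<Rightarrow> real" where
  "KK k = (\<Sum>p<dm k + dn k. \<Sum>q<dm k + dn k. Bd (dm k) p * Bd (dn k) q)"

definition lam :: "(nat \<Rightarrow> nat \<Rightarrow> real) \<Rightarrow> nat \<Rightarrow> real" where
  "lam c k = 1 + \<bar>c (dm k) (dn k)\<bar> / (fact (dm k) * fact (dn k)) * KK k * 2^k"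

definition ak :: "(nat \<Rightarrow> nat \<Rightarrow> real) \<Rightarrow> nat \<Rightarrow> real" where
  "ak c k = c (dm k) (dn k) / (fact (dm k) * fact (dn k) * lam c k ^ (dm k + dn k))"

definition Dval :: "(nat \<Rightarrow> nat \<Rightarrow> real) \<Rightarrow> bool list \<Rightarrow> nat \<Rightarrow> real \<times> real \<Rightarrow> real" where
  "Dval c ds k p = ak c k * lam c k ^ (cT ds + cF ds) * (deriv ^^ cT ds) (rho (dm k)) (lam c k * fst p)
      * (deriv ^^ cF ds) (rho (dn k)) (lam c k * snd p)"

definition Mb :: "(nat \<Rightarrow> nat \<Rightarrow> real) \<Rightarrow> bool list \<Rightarrow> nat \<Rightarrow> real" where
  "Mb c ds k = \<bar>ak c k\<bar> * lam c k ^ (cT ds + cF ds) * Bd (dm k) (cT ds) * Bd (dn k) (cF ds)"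

lemma KK_nonneg: "0 \<le> KK k"
  unfolding KK_def by (intro sum_nonneg mult_nonneg_nonneg Bd_nonneg)

lemma lam_ge1: "1 \<le> lam c k"
  unfolding lam_def using KK_nonneg by (simp add: divide_nonneg_pos)

lemma Dval_bound: "\<bar>Dval c ds k p\<bar> \<le> Mb c ds k"
proof -
  have l: "0 \<le> lam c k" using lam_ge1[of c k] by linarith
  have "\<bar>Dval c ds k p\<bar> = \<bar>ak c k\<bar> * lam c k ^ (cT ds + cF ds) * \<bar>(deriv ^^ cT ds) (rho (dm k)) (lam c k * fst p)\<bar>
      * \<bar>(deriv ^^ cF ds) (rho (dn k)) (lam c k * snd p)\<bar>"
    using l by (simp add: Dval_def abs_mult)
  also have "\<dots> \<le> Mb c ds k"
    unfolding Mb_def using l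
    by (intro mult_mono Bd mult_nonneg_nonneg Bd_nonneg) auto
  finally show ?thesis .
qed

lemma Mb_small:
  assumes N: "cT ds + cF ds < dm k + dn k"
  shows "Mb c ds k \<le> (1/2)^k"
proof -
  define m where "m = dm k"
  define n where "n = dn k"
  define p where "p = cT ds"
  define q where "q = cF ds"
  define L where "L = lam c k"
  define X where "X = \<bar>c m n\<bar> / (fact m * fact n) * KK k"
  have L1: "1 \<le> L" unfolding L_def by (rule lam_ge1)
  have X0: "0 \<le> X" unfolding X_def using KK_nonneg by simp
  have LX: "L = 1 + X * 2^k" unfolding L_def X_def lam_def m_def n_def by simp
  have BB: "Bd m p * Bd n q \<le> KK k"
  proof -
    have pq: "p \<in> {..<m+n}" "q \<in> {..<m+n}" using N unfolding p_def q_def m_def n_def by auto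
    have "Bd m p * Bd n q \<le> (\<Sum>q'<m+n. Bd m p * Bd n q')"
      by (rule member_le_sum[OF pq(2)]) (auto intro: mult_nonneg_nonneg Bd_nonneg)
    also have "\<dots> \<le> (\<Sum>p'<m+n. \<Sum>q'<m+n. Bd m p' * Bd n q')"
      by (rule member_le_sum[OF pq(1)]) (auto intro: sum_nonneg mult_nonneg_nonneg Bd_nonneg)
    finally show ?thesis unfolding KK_def m_def n_def .
  qed
  have pow: "L ^ (p+q) * L \<le> L ^ (m+n)"
  proof -
    have "L ^ (p+q) * L = L ^ Suc (p+q)" by simp
    also have "\<dots> \<le> L ^ (m+n)" using N L1 unfolding p_def q_def m_def n_def
      by (intro power_increasing) auto
    finally show ?thesis .
  qed
  have Lpos: "0 < L" using L1 by linarith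
  have "Mb c ds k = \<bar>c m n\<bar> / (fact m * fact n) * (L ^ (p+q) / L ^ (m+n)) * (Bd m p * Bd n q)"
    unfolding Mb_def ak_def m_def n_def p_def q_def L_def using lam_ge1[of c k]
    by (simp add: abs_mult abs_divide)
  also have "\<dots> \<le> \<bar>c m n\<bar> / (fact m * fact n) * (1 / L) * KK k"
  proof (intro mult_mono BB)
    show "L ^ (p+q) / L ^ (m+n) \<le> 1 / L"
      using pow Lpos by (simp add: divide_simps mult.commute)
  qed (use Lpos in \<open>auto intro: mult_nonneg_nonneg Bd_nonneg\<close>)
  also have "\<dots> = X / L" unfolding X_def by simp
  also have "\<dots> \<le> (1/2)^k"
  proof -
    have "X \<le> (1/2)^k * L" unfolding LX by (simp add: algebra_simps power_one_over)
    then show ?thesis using Lpos by (simp add: divide_simps)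
  qed
  finally show ?thesis .
qed

lemma triangle_mono: "a \<le> b \<Longrightarrow> triangle a \<le> triangle b"
  by (induction b) (auto simp: le_Suc_eq)

lemma Mb_summable: "summable (Mb c ds)"
proof (rule summable_comparison_test_ev[OF _ summable_geometric[of "1/2::real"]])
  let ?N = "cT ds + cF ds"
  have "eventually (\<lambda>k. k > triangle ?N + ?N) sequentially" by (rule eventually_gt_at_top)
  then show "eventually (\<lambda>k. norm (Mb c ds k) \<le> (1/2)^k) sequentially"
  proof (rule eventually_mono)
    fix k assume k: "k > triangle ?N + ?N"
    have "?N < dm k + dn k"
    proof (rule ccontr)
      assume "\<not> ?N < dm k + dn k"
      then have le: "dm k + dn k \<le> ?N" by simp
      have "k = prod_encode (dm k, dn k)" by (simp add: dm_def dn_def)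
      also have "\<dots> = triangle (dm k + dn k) + dm k" by (simp add: prod_encode_def)
      also have "\<dots> \<le> triangle ?N + ?N" using le triangle_mono by (intro add_mono) auto
      finally show False using k by simp
    qed
    moreover have "0 \<le> Mb c ds k" unfolding Mb_def
      by (intro mult_nonneg_nonneg Bd_nonneg) (use lam_ge1[of c k] in auto)
    ultimately show "norm (Mb c ds k) \<le> (1/2)^k" using Mb_small by simp
  qed
qed auto

lemma Dval_dx: "((\<lambda>t. Dval c ds k (t,y)) has_real_derivative Dval c (True#ds) k (x,y)) (at x)"
proof -
  let ?R1 = "(deriv ^^ cT ds) (rho (dm k))"
  let ?L = "lam c k"
  have "((\<lambda>t. ?R1 (?L*t)) has_real_derivative deriv ?R1 (?L*x) * ?L) (at x)"
    by (rule DERIV_chain2[OF dd DERIV_cmult_Id]) (rule sm1_higher_diff[OF rho_sm1])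
  then have "((\<lambda>t. ak c k * ?L ^ (cT ds + cF ds) * ?R1 (?L*t) * (deriv ^^ cF ds) (rho (dn k)) (?L * y))
     has_real_derivative ak c k * ?L ^ (cT ds + cF ds) * (deriv ?R1 (?L*x) * ?L) * (deriv ^^ cF ds) (rho (dn k)) (?L * y)) (at x)"
    by (intro DERIV_cmult_right DERIV_cmult)
  then show ?thesis by (simp add: Dval_def algebra_simps)
qed

lemma Dval_dy: "((\<lambda>t. Dval c ds k (x,t)) has_real_derivative Dval c (False#ds) k (x,y)) (at y)"
proof -
  let ?R2 = "(deriv ^^ cF ds) (rho (dn k))"
  let ?L = "lam c k"
  have "((\<lambda>t. ?R2 (?L*t)) has_real_derivative deriv ?R2 (?L*y) * ?L) (at y)"
    by (rule DERIV_chain2[OF dd DERIV_cmult_Id]) (rule sm1_higher_diff[OF rho_sm1])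
  then have "((\<lambda>t. ak c k * ?L ^ (cT ds + cF ds) * (deriv ^^ cT ds) (rho (dm k)) (?L * x) * ?R2 (?L*t))
     has_real_derivative ak c k * ?L ^ (cT ds + cF ds) * (deriv ^^ cT ds) (rho (dm k)) (?L * x) * (deriv ?R2 (?L*y) * ?L)) (at y)"
    by (intro DERIV_cmult)
  then show ?thesis by (simp add: Dval_def algebra_simps)
qed

lemma cont_higher: "continuous_on UNIV ((deriv ^^ j) (rho m))"
  by (metis sm1_higher_diff rho_sm1 differentiable_imp_continuous_within continuous_at_imp_continuous_on)

lemma Dval_cont: "continuous_on UNIV (Dval c ds k)"
proof -
  have a: "continuous_on UNIV (\<lambda>p::real\<times>real. (deriv ^^ cT ds) (rho (dm k)) (lam c k * fst p))"
    by (rule continuous_on_compose2[OF cont_higher]) (auto intro!: continuous_intros)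
  have b: "continuous_on UNIV (\<lambda>p::real\<times>real. (deriv ^^ cF ds) (rho (dn k)) (lam c k * snd p))"
    by (rule continuous_on_compose2[OF cont_higher]) (auto intro!: continuous_intros)
  show ?thesis unfolding Dval_def[abs_def] by (intro continuous_intros a b)
qed

definition Z :: "(nat \<Rightarrow> nat \<Rightarrow> real) \<Rightarrow> bool list \<Rightarrow> real \<times> real \<Rightarrow> real" where
  "Z c ds p = (\<Sum>k. Dval c ds k p)"

lemma Dval_summable: "summable (\<lambda>k. Dval c ds k p)"
  by (rule summable_comparison_test[OF _ Mb_summable]) (auto intro: Dval_bound)

lemma Z_dx: "((\<lambda>t. Z c ds (t,y)) has_real_derivative Z c (True#ds) (x,y)) (at x)"
proof -
  have "((\<lambda>x. \<Sum>n. Dval c ds n (x,y)) has_field_derivative (\<Sum>n. Dval c (True#ds) n (x,y))) (at x)"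
  proof (rule has_field_derivative_series'(2)[of UNIV _ "\<lambda>k t. Dval c (True#ds) k (t,y)" x])
    show "uniformly_convergent_on UNIV (\<lambda>n t. \<Sum>i<n. Dval c (True#ds) i (t,y))"
      by (rule Weierstrass_m_test'[OF _ Mb_summable]) (auto intro: Dval_bound)
    show "summable (\<lambda>n. Dval c ds n (x, y))" by (rule Dval_summable)
  qed (auto intro: Dval_dx)
  then show ?thesis by (simp add: Z_def)
qed

lemma Z_dy: "((\<lambda>t. Z c ds (x,t)) has_real_derivative Z c (False#ds) (x,y)) (at y)"
proof -
  have "((\<lambda>y. \<Sum>n. Dval c ds n (x,y)) has_field_derivative (\<Sum>n. Dval c (False#ds) n (x,y))) (at y)"
  proof (rule has_field_derivative_series'(2)[of UNIV _ "\<lambda>k t. Dval c (False#ds) k (x,t)" y])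
    show "uniformly_convergent_on UNIV (\<lambda>n t. \<Sum>i<n. Dval c (False#ds) i (x,t))"
      by (rule Weierstrass_m_test'[OF _ Mb_summable]) (auto intro: Dval_bound)
    show "summable (\<lambda>n. Dval c ds n (x, y))" by (rule Dval_summable)
  qed (auto intro: Dval_dy)
  then show ?thesis by (simp add: Z_def)
qed

lemma Z_cont: "continuous_on UNIV (Z c ds)"
proof -
  have ul: "uniform_limit UNIV (\<lambda>n p. \<Sum>i<n. Dval c ds i p) (\<lambda>p. \<Sum>i. Dval c ds i p) sequentially"
    by (rule Weierstrass_m_test[OF _ Mb_summable]) (auto intro: Dval_bound)
  have "continuous_on UNIV (\<lambda>p. \<Sum>i. Dval c ds i p)"
    by (rule uniform_limit_theorem[OF _ ul]) (auto intro!: always_eventually continuous_on_sum Dval_cont)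
  then show ?thesis by (simp add: Z_def[abs_def])
qed

lemma Z_iter: "iter_pd ds (Z c []) = Z c ds"
proof (induction ds)
  case Nil
  then show ?case by simp
next
  case (Cons d ds)
  have x: "pdx (Z c ds) = Z c (True#ds)"
  proof (rule ext)
    fix p :: "real \<times> real"
    obtain x y where p: "p = (x,y)" by (cases p)
    show "pdx (Z c ds) p = Z c (True#ds) p"
      unfolding p pdx_def by (simp add: DERIV_imp_deriv[OF Z_dx])
  qed
  have y: "pdy (Z c ds) = Z c (False#ds)"
  proof (rule ext)
    fix p :: "real \<times> real"
    obtain x y where p: "p = (x,y)" by (cases p)
    show "pdy (Z c ds) p = Z c (False#ds) p"
      unfolding p pdy_def by (simp add: DERIV_imp_deriv[OF Z_dy])
  qed
  show ?case using Cons x y by simp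
qed

lemma Dval_origin: "Dval c ds k (0,0) = (if k = prod_encode (cT ds, cF ds) then c (cT ds) (cF ds) else 0)"
proof (cases "k = prod_encode (cT ds, cF ds)")
  case True
  then have m: "dm k = cT ds" and n: "dn k = cF ds" by (auto simp: dm_def dn_def)
  have l: "lam c k \<noteq> 0" using lam_ge1[of c k] by linarith
  have "Dval c ds k (0,0) = c (cT ds) (cF ds)" using l by (simp add: Dval_def ak_def m n rho_jet)
  then show ?thesis using True by simp
next
  case False
  then have "dm k \<noteq> cT ds \<or> dn k \<noteq> cF ds"
    by (metis dm_def dn_def prod.collapse prod_decode_inverse)
  then show ?thesis using False by (auto simp: Dval_def rho_jet)
qed

lemma Z_jet: "Z c ds (0,0) = c (cT ds) (cF ds)"
proof -
  have "(\<lambda>k. Dval c ds k (0,0)) sums c (cT ds) (cF ds)"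
    unfolding Dval_origin using sums_single[of "prod_encode (cT ds, cF ds)" "\<lambda>_. c (cT ds) (cF ds)"] by simp
  then show ?thesis by (simp add: Z_def sums_iff)
qed

lemma borel: "\<exists>z. smooth_on UNIV z \<and> (\<forall>ds. iter_pd ds z (0,0) = c (cT ds) (cF ds))"
proof (intro exI conjI allI)
  show "iter_pd ds (Z c []) (0,0) = c (cT ds) (cF ds)" for ds by (simp add: Z_iter Z_jet)
  show "smooth_on UNIV (Z c [])"
    unfolding smooth_on_def Z_iter using Z_cont Z_dx Z_dy real_differentiable_def by blast
qed



lemma iter_pd_append: "iter_pd ds (iter_pd es f) = iter_pd (ds @ es) f"
  by (induction ds) auto

lemma smooth_iter: "smooth_on U f \<Longrightarrow> smooth_on U (iter_pd es f)"
  unfolding smooth_on_def iter_pd_append by blast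

lemma smooth_pdx: "smooth_on U f \<Longrightarrow> smooth_on U (pdx f)"
  using smooth_iter[of U f "[True]"] by simp

lemma smooth_pdy: "smooth_on U f \<Longrightarrow> smooth_on U (pdy f)"
  using smooth_iter[of U f "[False]"] by simp

lemma smooth_subset: "smooth_on U f \<Longrightarrow> open V \<Longrightarrow> V \<subseteq> U \<Longrightarrow> smooth_on V f"
  unfolding smooth_on_def by (meson continuous_on_subset subsetD)

lemma dist_line_x: "dist (t, y) (x, y) = \<bar>t - x\<bar>"
  by (simp add: dist_Pair_Pair dist_real_def)

lemma dist_line_y: "dist (x, t) (x, y) = \<bar>t - y\<bar>"
  by (simp add: dist_Pair_Pair dist_real_def)

lemma ev_line_x: fixes U :: "(real \<times> real) set" shows "open U \<Longrightarrow> (x,y) \<in> U \<Longrightarrow> eventually (\<lambda>t. (t,y) \<in> U) (nhds x)"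
proof -
  assume U: "open U" and p: "(x,y) \<in> U"
  obtain e where e: "e > 0" "ball (x,y) e \<subseteq> U" using U p open_contains_ball by blast
  show ?thesis unfolding eventually_nhds_metric
    using e by (intro exI[of _ e]) (auto simp: dist_line_x dist_real_def subset_iff dist_commute)
qed

lemma ev_line_y: fixes U :: "(real \<times> real) set" shows "open U \<Longrightarrow> (x,y) \<in> U \<Longrightarrow> eventually (\<lambda>t. (x,t) \<in> U) (nhds y)"
proof -
  assume U: "open U" and p: "(x,y) \<in> U"
  obtain e where e: "e > 0" "ball (x,y) e \<subseteq> U" using U p open_contains_ball by blast
  show ?thesis unfolding eventually_nhds_metric
    using e by (intro exI[of _ e]) (auto simp: dist_line_y dist_real_def subset_iff dist_commute)
qed

lemma pdx_local: "open U \<Longrightarrow> (\<forall>q\<in>U. f q = g q) \<Longrightarrow> p \<in> U \<Longrightarrow> pdx f p = pdx g p"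
proof -
  assume U: "open U" and fg: "\<forall>q\<in>U. f q = g q" and p: "p \<in> U"
  obtain x y where xy: "p = (x,y)" by (cases p)
  have "eventually (\<lambda>t. f (t,y) = g (t,y)) (nhds x)"
    using ev_line_x[OF U p[unfolded xy]] fg by (auto elim!: eventually_mono)
  then show ?thesis unfolding xy pdx_def by (simp add: deriv_cong_ev)
qed

lemma pdy_local: "open U \<Longrightarrow> (\<forall>q\<in>U. f q = g q) \<Longrightarrow> p \<in> U \<Longrightarrow> pdy f p = pdy g p"
proof -
  assume U: "open U" and fg: "\<forall>q\<in>U. f q = g q" and p: "p \<in> U"
  obtain x y where xy: "p = (x,y)" by (cases p)
  have "eventually (\<lambda>t. f (x,t) = g (x,t)) (nhds y)"
    using ev_line_y[OF U p[unfolded xy]] fg by (auto elim!: eventually_mono)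
  then show ?thesis unfolding xy pdy_def by (simp add: deriv_cong_ev)
qed

lemma has_dx: "smooth_on U f \<Longrightarrow> (x,y) \<in> U \<Longrightarrow> ((\<lambda>t. f (t,y)) has_real_derivative pdx f (x,y)) (at x)"
proof -
  assume "smooth_on U f" "(x,y) \<in> U"
  then have "(\<lambda>t. iter_pd [] f (t,y)) differentiable (at x)" unfolding smooth_on_def by blast
  then show ?thesis using dd by (simp add: pdx_def)
qed

lemma has_dy: "smooth_on U f \<Longrightarrow> (x,y) \<in> U \<Longrightarrow> ((\<lambda>t. f (x,t)) has_real_derivative pdy f (x,y)) (at y)"
proof -
  assume "smooth_on U f" "(x,y) \<in> U"
  then have "(\<lambda>t. iter_pd [] f (x,t)) differentiable (at y)" unfolding smooth_on_def by blast
  then show ?thesis using dd by (simp add: pdy_def)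
qed

lemma smooth_cont: "smooth_on U f \<Longrightarrow> continuous_on U f"
  unfolding smooth_on_def using iter_pd.simps(1) by metis

lemma smooth_open: "smooth_on U f \<Longrightarrow> open U"
  unfolding smooth_on_def by blast

lemma schwarz:
  assumes sm: "smooth_on U f" and p0: "(x0,y0) \<in> U"
  shows "pdx (pdy f) (x0,y0) = pdy (pdx f) (x0,y0)"
proof -
  have U: "open U" using sm smooth_open by blast
  obtain r where r: "r > 0" "ball (x0,y0) r \<subseteq> U" using U p0 open_contains_ball by blast
  define A where "A = pdx (pdy f)"
  define B where "B = pdy (pdx f)"
  have smx: "smooth_on U (pdx f)" and smy: "smooth_on U (pdy f)" using sm smooth_pdx smooth_pdy by auto
  have box: "(u,v) \<in> U \<and> dist (u,v) (x0,y0) \<le> 2 * sv"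
    if "0 < sv" "2 * sv < r" "x0 \<le> u" "u \<le> x0 + sv" "y0 \<le> v" "v \<le> y0 + sv" for sv u v
  proof -
    have "dist (u,v) (x0,y0) = sqrt ((u - x0)^2 + (v - y0)^2)" by (simp add: dist_Pair_Pair dist_real_def)
    also have "\<dots> \<le> \<bar>u - x0\<bar> + \<bar>v - y0\<bar>" by (rule sqrt_sum_squares_le_sum_abs)
    also have "\<dots> \<le> 2 * sv" using that by auto
    finally have d: "dist (u,v) (x0,y0) \<le> 2 * sv" .
    then have "(u,v) \<in> ball (x0,y0) r" using that by (simp add: dist_commute)
    then show ?thesis using r d by auto
  qed
  have claim: "\<exists>p1 p2. dist p1 (x0,y0) \<le> 2 * sv \<and> dist p2 (x0,y0) \<le> 2 * sv \<and> A p1 = B p2"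
    if sv: "0 < sv" "2 * sv < r" for sv
  proof -
    define D where "D = f (x0+sv,y0+sv) - f (x0+sv,y0) - f (x0,y0+sv) + f (x0,y0)"
    obtain xi where xi: "x0 < xi" "xi < x0 + sv"
      "(\<lambda>u. f (u,y0+sv) - f (u,y0)) (x0+sv) - (\<lambda>u. f (u,y0+sv) - f (u,y0)) x0 = (x0 + sv - x0) * (pdx f (xi,y0+sv) - pdx f (xi,y0))"
    proof -
      have "\<exists>z. x0 < z \<and> z < x0 + sv \<and> (\<lambda>u. f (u,y0+sv) - f (u,y0)) (x0+sv) - (\<lambda>u. f (u,y0+sv) - f (u,y0)) x0 = (x0 + sv - x0) * (pdx f (z,y0+sv) - pdx f (z,y0))"
      proof (rule MVT2)
        show "x0 < x0 + sv" using sv by simp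
        fix u assume "x0 \<le> u" "u \<le> x0 + sv"
        then have "(u,y0+sv) \<in> U" "(u,y0) \<in> U" using box[OF sv] sv by auto
        then show "((\<lambda>u. f (u,y0+sv) - f (u,y0)) has_real_derivative pdx f (u,y0+sv) - pdx f (u,y0)) (at u)"
          using has_dx[OF sm] by (intro DERIV_diff) auto
      qed
      then show ?thesis using that by blast
    qed
    obtain eta where eta: "y0 < eta" "eta < y0 + sv"
      "pdx f (xi,y0+sv) - pdx f (xi,y0) = (y0 + sv - y0) * B (xi,eta)"
    proof -
      have "\<exists>z. y0 < z \<and> z < y0 + sv \<and> (\<lambda>v. pdx f (xi,v)) (y0+sv) - (\<lambda>v. pdx f (xi,v)) y0 = (y0 + sv - y0) * B (xi,z)"
      proof (rule MVT2)
        show "y0 < y0 + sv" using sv by simp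
        fix v assume "y0 \<le> v" "v \<le> y0 + sv"
        then have "(xi,v) \<in> U" using box[OF sv] sv xi by auto
        then show "((\<lambda>v. pdx f (xi,v)) has_real_derivative B (xi,v)) (at v)"
          unfolding B_def by (rule has_dy[OF smx])
      qed
      then show ?thesis using that by auto
    qed
    have D1: "D = sv * (sv * B (xi,eta))" using xi(3) eta(3) unfolding D_def by (simp add: algebra_simps)
    obtain eta' where eta': "y0 < eta'" "eta' < y0 + sv"
      "(\<lambda>v. f (x0+sv,v) - f (x0,v)) (y0+sv) - (\<lambda>v. f (x0+sv,v) - f (x0,v)) y0 = (y0 + sv - y0) * (pdy f (x0+sv,eta') - pdy f (x0,eta'))"
    proof -
      have "\<exists>z. y0 < z \<and> z < y0 + sv \<and> (\<lambda>v. f (x0+sv,v) - f (x0,v)) (y0+sv) - (\<lambda>v. f (x0+sv,v) - f (x0,v)) y0 = (y0 + sv - y0) * (pdy f (x0+sv,z) - pdy f (x0,z))"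
      proof (rule MVT2)
        show "y0 < y0 + sv" using sv by simp
        fix v assume "y0 \<le> v" "v \<le> y0 + sv"
        then have "(x0+sv,v) \<in> U" "(x0,v) \<in> U" using box[OF sv] sv by auto
        then show "((\<lambda>v. f (x0+sv,v) - f (x0,v)) has_real_derivative pdy f (x0+sv,v) - pdy f (x0,v)) (at v)"
          using has_dy[OF sm] by (intro DERIV_diff) auto
      qed
      then show ?thesis using that by blast
    qed
    obtain xi' where xi': "x0 < xi'" "xi' < x0 + sv"
      "pdy f (x0+sv,eta') - pdy f (x0,eta') = (x0 + sv - x0) * A (xi',eta')"
    proof -
      have "\<exists>z. x0 < z \<and> z < x0 + sv \<and> (\<lambda>u. pdy f (u,eta')) (x0+sv) - (\<lambda>u. pdy f (u,eta')) x0 = (x0 + sv - x0) * A (z,eta')"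
      proof (rule MVT2)
        show "x0 < x0 + sv" using sv by simp
        fix u assume "x0 \<le> u" "u \<le> x0 + sv"
        then have "(u,eta') \<in> U" using box[OF sv] sv eta' by auto
        then show "((\<lambda>u. pdy f (u,eta')) has_real_derivative A (u,eta')) (at u)"
          unfolding A_def by (rule has_dx[OF smy])
      qed
      then show ?thesis using that by auto
    qed
    have D2: "D = sv * (sv * A (xi',eta'))" using xi'(3) eta'(3) unfolding D_def by (simp add: algebra_simps)
    have "A (xi',eta') = B (xi,eta)" using D1 D2 sv by simp
    moreover have "dist (xi',eta') (x0,y0) \<le> 2 * sv" using box[OF sv] xi' eta' by auto
    moreover have "dist (xi,eta) (x0,y0) \<le> 2 * sv" using box[OF sv] xi eta by auto
    ultimately show ?thesis by blast
  qed
  have cA: "isCont A (x0,y0)"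
  proof -
    have "continuous_on U (iter_pd [True,False] f)" using sm unfolding smooth_on_def by blast
    then have "continuous_on U A" by (simp add: A_def)
    then show ?thesis using U p0 continuous_on_eq_continuous_at by blast
  qed
  have cB: "isCont B (x0,y0)"
  proof -
    have "continuous_on U (iter_pd [False,True] f)" using sm unfolding smooth_on_def by blast
    then have "continuous_on U B" by (simp add: B_def)
    then show ?thesis using U p0 continuous_on_eq_continuous_at by blast
  qed
  show ?thesis
  proof (rule ccontr)
    assume ne: "pdx (pdy f) (x0,y0) \<noteq> pdy (pdx f) (x0,y0)"
    define e where "e = \<bar>A (x0,y0) - B (x0,y0)\<bar> / 2"
    have e: "e > 0" using ne unfolding e_def A_def B_def by simp
    obtain dA where dA: "dA > 0" "\<forall>p. dist p (x0,y0) < dA \<longrightarrow> dist (A p) (A (x0,y0)) < e"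
      using cA e unfolding continuous_at_eps_delta by blast
    obtain dB where dB: "dB > 0" "\<forall>p. dist p (x0,y0) < dB \<longrightarrow> dist (B p) (B (x0,y0)) < e"
      using cB e unfolding continuous_at_eps_delta by blast
    define sv where "sv = min (min dA dB) r / 4"
    have sv: "0 < sv" "2 * sv < r" using dA dB r unfolding sv_def by auto
    obtain p1 p2 where pp: "dist p1 (x0,y0) \<le> 2 * sv" "dist p2 (x0,y0) \<le> 2 * sv" "A p1 = B p2"
      using claim[OF sv] by blast
    have "2 * sv < dA" "2 * sv < dB" using dA dB r unfolding sv_def by auto
    then have "dist p1 (x0,y0) < dA" "dist p2 (x0,y0) < dB" using pp by linarith+
    then have "dist (A p1) (A (x0,y0)) < e" "dist (B p2) (B (x0,y0)) < e"
      using dA(2)[rule_format, of p1] dB(2)[rule_format, of p2] by auto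
    then have "\<bar>A (x0,y0) - B (x0,y0)\<bar> < 2*e" using pp(3) by (simp add: dist_real_def)
    then show False unfolding e_def by simp
  qed
qed



definition Dxy :: "nat \<Rightarrow> nat \<Rightarrow> (real \<times> real \<Rightarrow> real) \<Rightarrow> real \<times> real \<Rightarrow> real" where
  "Dxy m n f = iter_pd (replicate m True @ replicate n False) f"

lemma Dxy_00[simp]: "Dxy 0 0 f = f" by (simp add: Dxy_def)

lemma Dxy_pdx: "pdx (Dxy m n f) = Dxy (Suc m) n f" by (simp add: Dxy_def)

lemma smooth_Dxy: "smooth_on U f \<Longrightarrow> smooth_on U (Dxy m n f)"
  unfolding Dxy_def by (rule smooth_iter)

lemma iter_local: "open U \<Longrightarrow> \<forall>q\<in>U. f q = g q \<Longrightarrow> \<forall>p\<in>U. iter_pd ds f p = iter_pd ds g p"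
proof (induction ds)
  case (Cons d ds)
  then show ?case using pdx_local[of U "iter_pd ds f" "iter_pd ds g"] pdy_local[of U "iter_pd ds f" "iter_pd ds g"]
    by auto
qed auto

lemma schwarz': "smooth_on U f \<Longrightarrow> p \<in> U \<Longrightarrow> pdx (pdy f) p = pdy (pdx f) p"
  by (cases p) (simp add: schwarz)

lemma pdy_Xm: "smooth_on U f \<Longrightarrow> p \<in> U \<Longrightarrow>
   pdy (iter_pd (replicate m True) f) p = iter_pd (replicate m True) (pdy f) p"
proof (induction m arbitrary: p)
  case 0
  then show ?case by simp
next
  case (Suc m)
  have U: "open U" using Suc.prems smooth_open by blast
  have sm: "smooth_on U (iter_pd (replicate m True) f)" using Suc.prems smooth_iter by blast
  have "pdy (iter_pd (replicate (Suc m) True) f) p = pdy (pdx (iter_pd (replicate m True) f)) p" by simp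
  also have "\<dots> = pdx (pdy (iter_pd (replicate m True) f)) p" using schwarz'[OF sm Suc.prems(2)] by simp
  also have "\<dots> = pdx (iter_pd (replicate m True) (pdy f)) p"
    by (rule pdx_local[OF U _ Suc.prems(2)]) (use Suc in auto)
  also have "\<dots> = iter_pd (replicate (Suc m) True) (pdy f) p" by simp
  finally show ?case .
qed

lemma Dxy_pdy: "smooth_on U f \<Longrightarrow> p \<in> U \<Longrightarrow> pdy (Dxy m n f) p = Dxy m (Suc n) f p"
proof -
  assume sm: "smooth_on U f" and p: "p \<in> U"
  have "pdy (Dxy m n f) p = pdy (iter_pd (replicate m True) (iter_pd (replicate n False) f)) p"
    by (simp add: Dxy_def iter_pd_append)
  also have "\<dots> = iter_pd (replicate m True) (pdy (iter_pd (replicate n False) f)) p"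
    by (rule pdy_Xm[OF smooth_iter[OF sm] p])
  also have "\<dots> = Dxy m (Suc n) f p" unfolding Dxy_def replicate_Suc iter_pd_append[symmetric] by simp
  finally show ?thesis .
qed

lemma sym_iter: "smooth_on U f \<Longrightarrow> p \<in> U \<Longrightarrow> iter_pd ds f p = Dxy (cT ds) (cF ds) f p"
proof (induction ds arbitrary: p)
  case Nil
  then show ?case by simp
next
  case (Cons d ds)
  have U: "open U" using Cons.prems smooth_open by blast
  show ?case
  proof (cases d)
    case True
    have "iter_pd (d#ds) f p = pdx (iter_pd ds f) p" using True by simp
    also have "\<dots> = pdx (Dxy (cT ds) (cF ds) f) p"
      by (rule pdx_local[OF U _ Cons.prems(2)]) (use Cons in auto)
    also have "\<dots> = Dxy (cT (d#ds)) (cF (d#ds)) f p" using True by (simp add: Dxy_pdx)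
    finally show ?thesis .
  next
    case False
    have "iter_pd (d#ds) f p = pdy (iter_pd ds f) p" using False by simp
    also have "\<dots> = pdy (Dxy (cT ds) (cF ds) f) p"
      by (rule pdy_local[OF U _ Cons.prems(2)]) (use Cons in auto)
    also have "\<dots> = Dxy (cT (d#ds)) (cF (d#ds)) f p" using False Dxy_pdy[OF Cons.prems] by simp
    finally show ?thesis .
  qed
qed

lemma has_dx_sum_prod:
  assumes "finite I" "finite J" "\<And>i j. smooth_on U (A i j)" "\<And>i j. smooth_on U (B i j)" "(x,y) \<in> U"
  shows "((\<lambda>t. \<Sum>i\<in>I. \<Sum>j\<in>J. w i j * (A i j (t,y) * B i j (t,y))) has_real_derivative
     (\<Sum>i\<in>I. \<Sum>j\<in>J. w i j * (pdx (A i j) (x,y) * B i j (x,y) + A i j (x,y) * pdx (B i j) (x,y)))) (at x)"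
  by (intro DERIV_sum DERIV_cmult DERIV_mult2 has_dx[OF assms(3) assms(5)] has_dx[OF assms(4) assms(5)])

lemma has_dy_sum_prod:
  assumes "finite I" "finite J" "\<And>i j. smooth_on U (A i j)" "\<And>i j. smooth_on U (B i j)" "(x,y) \<in> U"
  shows "((\<lambda>t. \<Sum>i\<in>I. \<Sum>j\<in>J. w i j * (A i j (x,t) * B i j (x,t))) has_real_derivative
     (\<Sum>i\<in>I. \<Sum>j\<in>J. w i j * (pdy (A i j) (x,y) * B i j (x,y) + A i j (x,y) * pdy (B i j) (x,y)))) (at y)"
  by (intro DERIV_sum DERIV_cmult DERIV_mult2 has_dy[OF assms(3) assms(5)] has_dy[OF assms(4) assms(5)])

lemma pascal1: "(\<Sum>i\<le>Suc m. real (Suc m choose i) * K i) = (\<Sum>i\<le>m. real (m choose i) * (K (Suc i) + K i))"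
proof -
  have "(\<Sum>i\<le>Suc m. real (Suc m choose i) * K i) = K 0 + (\<Sum>i\<le>m. real (Suc m choose Suc i) * K (Suc i))"
    by (simp only: sum.atMost_Suc_shift) simp
  also have "\<dots> = (\<Sum>i\<le>m. real (m choose i) * K (Suc i)) + (K 0 + (\<Sum>i\<le>m. real (m choose Suc i) * K (Suc i)))"
    by (simp add: algebra_simps sum.distrib)
  also have "K 0 + (\<Sum>i\<le>m. real (m choose Suc i) * K (Suc i)) = (\<Sum>i\<le>Suc m. real (m choose i) * K i)"
    by (simp only: sum.atMost_Suc_shift) simp
  also have "\<dots> = (\<Sum>i\<le>m. real (m choose i) * K i)" by simp
  finally show ?thesis by (simp add: algebra_simps sum.distrib)
qed

lemma pascal_x:
  "(\<Sum>i\<le>m. \<Sum>j\<le>n. real (m choose i) * real (n choose j) * (F (Suc i) j (m-i) (n-j) + F i j (Suc (m-i)) (n-j)))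
   = (\<Sum>i\<le>Suc m. \<Sum>j\<le>n. real (Suc m choose i) * real (n choose j) * F i j (Suc m - i) (n-j))"
proof -
  define K where "K i = (\<Sum>j\<le>n. real (n choose j) * F i j (Suc m - i) (n-j))" for i
  have "(\<Sum>i\<le>Suc m. \<Sum>j\<le>n. real (Suc m choose i) * real (n choose j) * F i j (Suc m - i) (n-j))
      = (\<Sum>i\<le>Suc m. real (Suc m choose i) * K i)"
    by (simp add: K_def sum_distrib_left mult.assoc)
  also have "\<dots> = (\<Sum>i\<le>m. real (m choose i) * (K (Suc i) + K i))" by (rule pascal1)
  also have "\<dots> = (\<Sum>i\<le>m. \<Sum>j\<le>n. real (m choose i) * real (n choose j) * (F (Suc i) j (m-i) (n-j) + F i j (Suc (m-i)) (n-j)))"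
  proof (rule sum.cong[OF refl])
    fix i assume "i \<in> {..m}"
    then have i: "Suc m - i = Suc (m - i)" by (simp add: Suc_diff_le)
    show "real (m choose i) * (K (Suc i) + K i) = (\<Sum>j\<le>n. real (m choose i) * real (n choose j) * (F (Suc i) j (m-i) (n-j) + F i j (Suc (m-i)) (n-j)))"
      by (simp add: K_def i sum_distrib_left sum.distrib algebra_simps)
  qed
  finally show ?thesis by simp
qed

lemma pascal_y:
  "(\<Sum>i\<le>m. \<Sum>j\<le>n. real (m choose i) * real (n choose j) * (F i (Suc j) (m-i) (n-j) + F i j (m-i) (Suc (n-j))))
   = (\<Sum>i\<le>m. \<Sum>j\<le>Suc n. real (m choose i) * real (Suc n choose j) * F i j (m-i) (Suc n - j))"
proof (rule sum.cong[OF refl])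
  fix i assume "i \<in> {..m}"
  define K where "K j = F i j (m-i) (Suc n - j)" for j
  have "(\<Sum>j\<le>Suc n. real (m choose i) * real (Suc n choose j) * F i j (m-i) (Suc n - j))
      = real (m choose i) * (\<Sum>j\<le>Suc n. real (Suc n choose j) * K j)"
    by (simp add: K_def sum_distrib_left mult.assoc del: sum.atMost_Suc)
  also have "\<dots> = real (m choose i) * (\<Sum>j\<le>n. real (n choose j) * (K (Suc j) + K j))" by (simp only: pascal1)
  also have "\<dots> = (\<Sum>j\<le>n. real (m choose i) * real (n choose j) * (F i (Suc j) (m-i) (n-j) + F i j (m-i) (Suc (n-j))))"
    unfolding sum_distrib_left
  proof (rule sum.cong[OF refl])
    fix j assume "j \<in> {..n}"
    then have j: "Suc n - j = Suc (n - j)" by (simp add: Suc_diff_le)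
    show "real (m choose i) * (real (n choose j) * (K (Suc j) + K j)) =
       real (m choose i) * real (n choose j) * (F i (Suc j) (m-i) (n-j) + F i j (m-i) (Suc (n-j)))"
      by (simp add: K_def j)
  qed
  finally show "(\<Sum>j\<le>n. real (m choose i) * real (n choose j) * (F i (Suc j) (m-i) (n-j) + F i j (m-i) (Suc (n-j))))
      = (\<Sum>j\<le>Suc n. real (m choose i) * real (Suc n choose j) * F i j (m-i) (Suc n - j))" by simp
qed

definition LB :: "nat \<Rightarrow> nat \<Rightarrow> (real \<times> real \<Rightarrow> real) \<Rightarrow> (real \<times> real \<Rightarrow> real) \<Rightarrow> real \<times> real \<Rightarrow> real" where
  "LB m n f g p = (\<Sum>i\<le>m. \<Sum>j\<le>n. real (m choose i) * real (n choose j) * (Dxy i j f p * Dxy (m-i) (n-j) g p))"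

lemma LB_dx:
  assumes f: "smooth_on U f" and g: "smooth_on U g" and p: "(x,y) \<in> U"
  shows "((\<lambda>t. LB m n f g (t,y)) has_real_derivative LB (Suc m) n f g (x,y)) (at x)"
proof -
  have "((\<lambda>t. LB m n f g (t,y)) has_real_derivative
     (\<Sum>i\<le>m. \<Sum>j\<le>n. real (m choose i) * real (n choose j) * (pdx (Dxy i j f) (x,y) * Dxy (m-i) (n-j) g (x,y) + Dxy i j f (x,y) * pdx (Dxy (m-i) (n-j) g) (x,y)))) (at x)"
    unfolding LB_def
    by (rule has_dx_sum_prod[of _ _ U "\<lambda>i j. Dxy i j f" "\<lambda>i j. Dxy (m-i) (n-j) g"]) (auto intro: smooth_Dxy f g p)
  also have "(\<Sum>i\<le>m. \<Sum>j\<le>n. real (m choose i) * real (n choose j) * (pdx (Dxy i j f) (x,y) * Dxy (m-i) (n-j) g (x,y) + Dxy i j f (x,y) * pdx (Dxy (m-i) (n-j) g) (x,y)))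
     = LB (Suc m) n f g (x,y)"
    unfolding Dxy_pdx LB_def
    using pascal_x[of m n "\<lambda>i j i' j'. Dxy i j f (x,y) * Dxy i' j' g (x,y)"] by simp
  finally show ?thesis .
qed

lemma LB_dy:
  assumes f: "smooth_on U f" and g: "smooth_on U g" and p: "(x,y) \<in> U"
  shows "((\<lambda>t. LB m n f g (x,t)) has_real_derivative LB m (Suc n) f g (x,y)) (at y)"
proof -
  have "((\<lambda>t. LB m n f g (x,t)) has_real_derivative
     (\<Sum>i\<le>m. \<Sum>j\<le>n. real (m choose i) * real (n choose j) * (pdy (Dxy i j f) (x,y) * Dxy (m-i) (n-j) g (x,y) + Dxy i j f (x,y) * pdy (Dxy (m-i) (n-j) g) (x,y)))) (at y)"
    unfolding LB_def
    by (rule has_dy_sum_prod[of _ _ U "\<lambda>i j. Dxy i j f" "\<lambda>i j. Dxy (m-i) (n-j) g"]) (auto intro: smooth_Dxy f g p)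
  also have "(\<Sum>i\<le>m. \<Sum>j\<le>n. real (m choose i) * real (n choose j) * (pdy (Dxy i j f) (x,y) * Dxy (m-i) (n-j) g (x,y) + Dxy i j f (x,y) * pdy (Dxy (m-i) (n-j) g) (x,y)))
     = LB m (Suc n) f g (x,y)"
    unfolding Dxy_pdy[OF f p] Dxy_pdy[OF g p] LB_def
    using pascal_y[of m n "\<lambda>i j i' j'. Dxy i j f (x,y) * Dxy i' j' g (x,y)"] by simp
  finally show ?thesis .
qed

lemma leibniz:
  assumes f: "smooth_on U f" and g: "smooth_on U g"
  shows "p \<in> U \<Longrightarrow> iter_pd ds (\<lambda>q. f q * g q) p = LB (cT ds) (cF ds) f g p"
proof (induction ds arbitrary: p)
  case Nil
  then show ?case by (simp add: LB_def)
next
  case (Cons d ds)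
  have U: "open U" using f smooth_open by blast
  obtain x y where p: "p = (x,y)" by (cases p)
  show ?case
  proof (cases d)
    case True
    have "iter_pd (d#ds) (\<lambda>q. f q * g q) p = pdx (iter_pd ds (\<lambda>q. f q * g q)) p" using True by simp
    also have "\<dots> = pdx (LB (cT ds) (cF ds) f g) p"
      by (rule pdx_local[OF U _ Cons.prems]) (use Cons in auto)
    also have "\<dots> = LB (Suc (cT ds)) (cF ds) f g p"
      unfolding p pdx_def using LB_dx[OF f g Cons.prems[unfolded p]] by (simp add: DERIV_imp_deriv)
    finally show ?thesis using True by simp
  next
    case False
    have "iter_pd (d#ds) (\<lambda>q. f q * g q) p = pdy (iter_pd ds (\<lambda>q. f q * g q)) p" using False by simp
    also have "\<dots> = pdy (LB (cT ds) (cF ds) f g) p"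
      by (rule pdy_local[OF U _ Cons.prems]) (use Cons in auto)
    also have "\<dots> = LB (cT ds) (Suc (cF ds)) f g p"
      unfolding p pdy_def using LB_dy[OF f g Cons.prems[unfolded p]] by (simp add: DERIV_imp_deriv)
    finally show ?thesis using False by simp
  qed
qed



definition Bil :: "(nat \<Rightarrow> nat \<Rightarrow> real) \<Rightarrow> (nat \<Rightarrow> nat \<Rightarrow> real) \<Rightarrow> nat \<Rightarrow> nat \<Rightarrow> real" where
  "Bil u v m n = (\<Sum>i\<le>m. \<Sum>j\<le>n. real (m choose i) * real (n choose j) *
      (u (Suc i) j * v (Suc (m-i)) (n-j) + u i (Suc j) * v (m-i) (Suc (n-j))))"

primrec Wf :: "real \<Rightarrow> real \<Rightarrow> (nat \<Rightarrow> nat \<Rightarrow> real) \<Rightarrow> nat \<Rightarrow> nat \<Rightarrow> nat \<Rightarrow> real" where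
  "Wf a b H 0 = (\<lambda>m n. 0)"
| "Wf a b H (Suc k) = (\<lambda>m n. if m + n = Suc k \<and> 3 \<le> Suc k
      then (H m n - Bil (Wf a b H k) (Wf a b H k) m n) / (2 * (real m * a + real n * b))
      else Wf a b H k m n)"

definition ww :: "real \<Rightarrow> real \<Rightarrow> (nat \<Rightarrow> nat \<Rightarrow> real) \<Rightarrow> nat \<Rightarrow> nat \<Rightarrow> real" where
  "ww a b H m n = Wf a b H (m+n) m n"

definition c2 :: "real \<Rightarrow> real \<Rightarrow> nat \<Rightarrow> nat \<Rightarrow> real" where
  "c2 a b m n = (if m = 2 \<and> n = 0 then a else if m = 0 \<and> n = 2 then b else 0)"

lemma W1: "k < m + n \<Longrightarrow> Wf a b H k m n = 0"
  by (induction k) auto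

lemma W2: "m + n \<le> k \<Longrightarrow> Wf a b H k m n = ww a b H m n"
proof (induction k)
  case 0
  then show ?case by (simp add: ww_def)
next
  case (Suc k)
  show ?case
  proof (cases "m + n = Suc k")
    case True
    then show ?thesis by (simp add: ww_def)
  next
    case False
    then show ?thesis using Suc by simp
  qed
qed

lemma W3: "m + n < 3 \<Longrightarrow> ww a b H m n = 0"
proof -
  assume d: "m + n < 3"
  show ?thesis
  proof (cases "m + n")
    case 0
    then show ?thesis by (simp add: ww_def)
  next
    case (Suc k)
    then show ?thesis using d W1[of k m n a b H] by (simp add: ww_def)
  qed
qed

lemma W6: "m + n < 3 \<Longrightarrow> Wf a b H k m n = 0"
  by (cases "m + n \<le> k") (auto simp: W2 W3 W1)

lemma W4: "m + n = Suc k \<Longrightarrow> 3 \<le> Suc k \<Longrightarrow>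
   ww a b H m n = (H m n - Bil (Wf a b H k) (Wf a b H k) m n) / (2 * (real m * a + real n * b))"
  by (simp add: ww_def)

lemma prod_eq_aux:
  assumes "d1 + d2 = Suc (Suc (Suc k))" "p1 + q1 = d1" "p2 + q2 = d2"
  shows "Wf a b H k p1 q1 * Wf a b H k p2 q2 = ww a b H p1 q1 * ww a b H p2 q2"
proof (cases "d1 \<le> k \<and> d2 \<le> k")
  case True
  then show ?thesis using assms W2 by auto
next
  case False
  then have "p1 + q1 < 3 \<or> p2 + q2 < 3" using assms by linarith
  then show ?thesis using W3 W6 by auto
qed

lemma W5: "m + n = Suc k \<Longrightarrow> Bil (Wf a b H k) (Wf a b H k) m n = Bil (ww a b H) (ww a b H) m n"
  unfolding Bil_def
proof (intro sum.cong refl)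
  fix i j assume mn: "m + n = Suc k" and i: "i \<in> {..m}" and j: "j \<in> {..n}"
  have e1: "Wf a b H k (Suc i) j * Wf a b H k (Suc (m-i)) (n-j) = ww a b H (Suc i) j * ww a b H (Suc (m-i)) (n-j)"
    by (rule prod_eq_aux[of "Suc i + j" "Suc (m-i) + (n-j)"]) (use mn i j in auto)
  have e2: "Wf a b H k i (Suc j) * Wf a b H k (m-i) (Suc (n-j)) = ww a b H i (Suc j) * ww a b H (m-i) (Suc (n-j))"
    by (rule prod_eq_aux[of "i + Suc j" "(m-i) + Suc (n-j)"]) (use mn i j in auto)
  show "real (m choose i) * real (n choose j) *
       (Wf a b H k (Suc i) j * Wf a b H k (Suc (m - i)) (n - j) + Wf a b H k i (Suc j) * Wf a b H k (m - i) (Suc (n - j))) =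
       real (m choose i) * real (n choose j) *
       (ww a b H (Suc i) j * ww a b H (Suc (m - i)) (n - j) + ww a b H i (Suc j) * ww a b H (m - i) (Suc (n - j)))"
    using e1 e2 by simp
qed

lemma Bil_add: "Bil (\<lambda>x y. u x y + v x y) (\<lambda>x y. u x y + v x y) m n =
   Bil u u m n + Bil u v m n + Bil v u m n + Bil v v m n"
  unfolding Bil_def by (simp add: sum.distrib[symmetric] algebra_simps)

lemma sum1_single: "(\<Sum>j\<le>(n::nat). if j = jz then V else (0::real)) = (if jz \<le> n then V else 0)"
  by (induction n) (auto simp: le_Suc_eq)

lemma sum2_single: fixes m n iz jz :: nat shows "(\<Sum>i\<le>m. \<Sum>j\<le>n. if i = iz \<and> j = jz then V else (0::real)) = (if iz \<le> m \<and> jz \<le> n then V else 0)"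
proof -
  have "(\<Sum>i\<le>m. \<Sum>j\<le>n. if i = iz \<and> j = jz then V else (0::real)) = (\<Sum>i\<le>m. if i = iz then (if jz \<le> n then V else 0) else 0)"
  proof (intro sum.cong refl)
    fix i
    show "(\<Sum>j\<le>n. if i = iz \<and> j = jz then V else (0::real)) = (if i = iz then (if jz \<le> n then V else 0) else 0)"
    proof (cases "i = iz")
      case True
      then show ?thesis using sum1_single[where n=n and jz=jz and V=V] by simp
    qed simp
  qed
  also have "\<dots> = (if iz \<le> m \<and> jz \<le> n then V else 0)" using sum1_single[where n=m and jz=iz and V="if jz \<le> n then V else 0"] by simp
  finally show ?thesis .
qed

lemma Bil_c2_w: "Bil (c2 a b) w m n = (real m * a + real n * b) * w m n"
proof -
  have "Bil (c2 a b) w m n = (\<Sum>i\<le>m. \<Sum>j\<le>n. (if i = 1 \<and> j = 0 then real m * a * w m n else 0) +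
      (if i = 0 \<and> j = 1 then real n * b * w m n else 0))"
    unfolding Bil_def
  proof (intro sum.cong refl)
    fix i j assume i: "i \<in> {..m}" and j: "j \<in> {..n}"
    show "real (m choose i) * real (n choose j) * (c2 a b (Suc i) j * w (Suc (m - i)) (n - j) + c2 a b i (Suc j) * w (m - i) (Suc (n - j))) =
       (if i = 1 \<and> j = 0 then real m * a * w m n else 0) + (if i = 0 \<and> j = 1 then real n * b * w m n else 0)"
      using i j by (auto simp: c2_def Suc_diff_le)
  qed
  also have "\<dots> = (if 1 \<le> m then real m * a * w m n else 0) + (if 1 \<le> n then real n * b * w m n else 0)"
    by (simp add: sum.distrib sum2_single)
  also have "\<dots> = (real m * a + real n * b) * w m n" by (cases "m = 0"; cases "n = 0") (auto simp: algebra_simps)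
  finally show ?thesis .
qed

lemma Bil_w_c2: "Bil w (c2 a b) m n = (real m * a + real n * b) * w m n"
proof -
  have "Bil w (c2 a b) m n = (\<Sum>i\<le>m. \<Sum>j\<le>n. (if i = m - 1 \<and> j = n then real m * a * w m n else 0) +
      (if i = m \<and> j = n - 1 then real n * b * w m n else 0))"
    unfolding Bil_def
  proof (intro sum.cong refl)
    fix i j assume i: "i \<in> {..m}" and j: "j \<in> {..n}"
    have A: "real (m choose i) * real (n choose j) * (w (Suc i) j * c2 a b (Suc (m - i)) (n - j)) =
       (if i = m - 1 \<and> j = n then real m * a * w m n else 0)"
    proof (cases "i = m - 1 \<and> j = n \<and> 1 \<le> m")
      case True
      then have "m choose i = m" by (metis binomial_symmetric choose_one diff_diff_cancel diff_le_self)
      then show ?thesis using True by (simp add: c2_def)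
    next
      case False
      then show ?thesis using i j by (auto simp: c2_def)
    qed
    have B: "real (m choose i) * real (n choose j) * (w i (Suc j) * c2 a b (m - i) (Suc (n - j))) =
       (if i = m \<and> j = n - 1 then real n * b * w m n else 0)"
    proof (cases "i = m \<and> j = n - 1 \<and> 1 \<le> n")
      case True
      then have "n choose j = n" by (metis binomial_symmetric choose_one diff_diff_cancel diff_le_self)
      then show ?thesis using True by (simp add: c2_def)
    next
      case False
      then show ?thesis using i j by (auto simp: c2_def)
    qed
    show "real (m choose i) * real (n choose j) * (w (Suc i) j * c2 a b (Suc (m - i)) (n - j) + w i (Suc j) * c2 a b (m - i) (Suc (n - j))) =
       (if i = m - 1 \<and> j = n then real m * a * w m n else 0) + (if i = m \<and> j = n - 1 then real n * b * w m n else 0)"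
      using A B by (simp add: distrib_left)
  qed
  also have "\<dots> = (real m * a + real n * b) * w m n"
    by (simp add: sum.distrib sum2_single algebra_simps)
  finally show ?thesis .
qed

lemma Bil_ww_low: "m + n \<le> 2 \<Longrightarrow> Bil (ww a b H) (ww a b H) m n = 0"
  unfolding Bil_def
proof (rule sum.neutral, rule ballI)
  fix i assume mn: "m + n \<le> 2" and i: "i \<in> {..m}"
  show "(\<Sum>j\<le>n. real (m choose i) * real (n choose j) *
        (ww a b H (Suc i) j * ww a b H (Suc (m - i)) (n - j) + ww a b H i (Suc j) * ww a b H (m - i) (Suc (n - j)))) = 0"
  proof (rule sum.neutral, rule ballI)
    fix j assume j: "j \<in> {..n}"
    have "Suc i + j < 3 \<or> Suc (m-i) + (n-j) < 3" using mn i j by auto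
    moreover have "i + Suc j < 3 \<or> (m-i) + Suc (n-j) < 3" using mn i j by auto
    ultimately show "real (m choose i) * real (n choose j) *
        (ww a b H (Suc i) j * ww a b H (Suc (m - i)) (n - j) + ww a b H i (Suc j) * ww a b H (m - i) (Suc (n - j))) = 0"
      using W3 by auto
  qed
qed

lemma solve_coeffs:
  fixes a b :: real and H :: "nat \<Rightarrow> nat \<Rightarrow> real"
  assumes a: "a > 0" and b: "b > 0"
    and H00: "H 0 0 = 0" and H10: "H 1 0 = 0" and H01: "H 0 1 = 0"
    and H20: "H 2 0 = 2 * a^2" and H11: "H 1 1 = 0" and H02: "H 0 2 = 2 * b^2"
  shows "\<exists>c. \<forall>m n. Bil c c m n = H m n"
proof (intro exI allI)
  fix m n
  let ?w = "ww a b H"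
  let ?c = "\<lambda>x y. c2 a b x y + ?w x y"
  have dec: "Bil ?c ?c m n = Bil (c2 a b) (c2 a b) m n + 2 * (real m * a + real n * b) * ?w m n + Bil ?w ?w m n"
    using Bil_add[of "c2 a b" ?w m n] Bil_c2_w[of a b ?w m n] Bil_w_c2[of ?w a b m n] by simp
  show "Bil ?c ?c m n = H m n"
  proof (cases "m + n \<le> 2")
    case True
    have w0: "?w m n = 0" using True W3 by simp
    have "Bil (c2 a b) (c2 a b) m n = H m n"
    proof -
      have "(m,n) \<in> {(0,0),(1,0),(0,1),(2,0),(1,1),(0,2)}" using True
        by (cases m; cases n) (auto simp: numeral_2_eq_2)
      moreover have "H (Suc 0) 0 = 0" "H 0 (Suc 0) = 0" "H (Suc 0) (Suc 0) = 0"
        "H (Suc (Suc 0)) 0 = 2 * (a * a)" "H 0 (Suc (Suc 0)) = 2 * (b * b)"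
        using H10 H01 H11 H20 H02 by (simp_all add: numeral_2_eq_2 power2_eq_square)
      ultimately show ?thesis
        by (auto simp: Bil_def c2_def numeral_2_eq_2 H00)
    qed
    then show ?thesis using dec w0 Bil_ww_low[OF True] by simp
  next
    case False
    then obtain k where k: "m + n = Suc k" "3 \<le> Suc k" by (metis Suc_pred' add_gr_0 not_le not_less_eq_eq
        numeral_3_eq_3 zero_less_Suc le_zero_eq less_Suc_eq_le numeral_2_eq_2 gr0I)
    have pos: "real m * a + real n * b > 0"
    proof (cases "m = 0")
      case True
      then have "n > 0" using k by simp
      then show ?thesis using True b by simp
    next
      case False
      then show ?thesis using a b by (simp add: add_pos_nonneg)
    qed
    have c2z: "Bil (c2 a b) (c2 a b) m n = 0"
      unfolding Bil_def
    proof (rule sum.neutral, rule ballI)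
      fix i assume i: "i \<in> {..m}"
      show "(\<Sum>j\<le>n. real (m choose i) * real (n choose j) *
          (c2 a b (Suc i) j * c2 a b (Suc (m - i)) (n - j) + c2 a b i (Suc j) * c2 a b (m - i) (Suc (n - j)))) = 0"
        using i k by (intro sum.neutral ballI) (auto simp: c2_def)
    qed
    have "?w m n = (H m n - Bil ?w ?w m n) / (2 * (real m * a + real n * b))"
      using W4[OF k] W5[OF k(1)] by simp
    then have "2 * (real m * a + real n * b) * ?w m n = H m n - Bil ?w ?w m n" using pos by (simp add: field_simps)
    then show ?thesis using dec c2z by simp
  qed
qed



lemma smooth_via:
  assumes U: "open U"
    and F: "\<And>ds. \<exists>F. (\<forall>p\<in>U. iter_pd ds h p = F p) \<and> continuous_on U F \<and>
        (\<forall>x y. (x,y) \<in> U \<longrightarrow> (\<lambda>t. F (t,y)) differentiable (at x) \<and> (\<lambda>t. F (x,t)) differentiable (at y))"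
  shows "smooth_on U h"
  unfolding smooth_on_def
proof (intro conjI allI impI U)
  fix ds
  obtain G where G: "\<forall>p\<in>U. iter_pd ds h p = G p" "continuous_on U G"
    "\<forall>x y. (x,y) \<in> U \<longrightarrow> (\<lambda>t. G (t,y)) differentiable (at x) \<and> (\<lambda>t. G (x,t)) differentiable (at y)"
    using F by blast
  show "continuous_on U (iter_pd ds h)" using G(2) continuous_on_cong[OF refl, of U "iter_pd ds h" G] G(1) by simp
  fix x y assume p: "(x,y) \<in> U"
  obtain D1 where D1: "((\<lambda>t. G (t,y)) has_real_derivative D1) (at x)"
    using G(3) p real_differentiable_def by blast
  have ev1: "eventually (\<lambda>t. iter_pd ds h (t,y) = G (t,y)) (nhds x)"
    using ev_line_x[OF U p] G(1) by (auto elim!: eventually_mono)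
  have "((\<lambda>t. iter_pd ds h (t,y)) has_real_derivative D1) (at x)"
    using DERIV_cong_ev[OF refl ev1 refl] D1 by blast
  then show "(\<lambda>t. iter_pd ds h (t,y)) differentiable (at x)" using real_differentiable_def by blast
  obtain D2 where D2: "((\<lambda>t. G (x,t)) has_real_derivative D2) (at y)"
    using G(3) p real_differentiable_def by blast
  have ev2: "eventually (\<lambda>t. iter_pd ds h (x,t) = G (x,t)) (nhds y)"
    using ev_line_y[OF U p] G(1) by (auto elim!: eventually_mono)
  have "((\<lambda>t. iter_pd ds h (x,t)) has_real_derivative D2) (at y)"
    using DERIV_cong_ev[OF refl ev2 refl] D2 by blast
  then show "(\<lambda>t. iter_pd ds h (x,t)) differentiable (at y)" using real_differentiable_def by blast
qed

lemma pdx_add: "smooth_on U A \<Longrightarrow> smooth_on U B \<Longrightarrow> p \<in> U \<Longrightarrow> pdx (\<lambda>q. A q + B q) p = pdx A p + pdx B p"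
proof -
  assume sA: "smooth_on U A" and sB: "smooth_on U B" and p: "p \<in> U"
  obtain x y where xy: "p = (x,y)" by (cases p)
  have "((\<lambda>t. A (t,y) + B (t,y)) has_real_derivative pdx A (x,y) + pdx B (x,y)) (at x)"
    by (rule DERIV_add[OF has_dx[OF sA p[unfolded xy]] has_dx[OF sB p[unfolded xy]]])
  from DERIV_imp_deriv[OF this] show ?thesis unfolding xy pdx_def by simp
qed

lemma pdy_add: "smooth_on U A \<Longrightarrow> smooth_on U B \<Longrightarrow> p \<in> U \<Longrightarrow> pdy (\<lambda>q. A q + B q) p = pdy A p + pdy B p"
proof -
  assume sA: "smooth_on U A" and sB: "smooth_on U B" and p: "p \<in> U"
  obtain x y where xy: "p = (x,y)" by (cases p)
  have "((\<lambda>t. A (x,t) + B (x,t)) has_real_derivative pdy A (x,y) + pdy B (x,y)) (at y)"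
    by (rule DERIV_add[OF has_dy[OF sA p[unfolded xy]] has_dy[OF sB p[unfolded xy]]])
  from DERIV_imp_deriv[OF this] show ?thesis unfolding xy pdy_def by simp
qed

lemma pdx_diff: "smooth_on U A \<Longrightarrow> smooth_on U B \<Longrightarrow> p \<in> U \<Longrightarrow> pdx (\<lambda>q. A q - B q) p = pdx A p - pdx B p"
proof -
  assume sA: "smooth_on U A" and sB: "smooth_on U B" and p: "p \<in> U"
  obtain x y where xy: "p = (x,y)" by (cases p)
  have "((\<lambda>t. A (t,y) - B (t,y)) has_real_derivative pdx A (x,y) - pdx B (x,y)) (at x)"
    by (rule DERIV_diff[OF has_dx[OF sA p[unfolded xy]] has_dx[OF sB p[unfolded xy]]])
  from DERIV_imp_deriv[OF this] show ?thesis unfolding xy pdx_def by simp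
qed

lemma pdy_diff: "smooth_on U A \<Longrightarrow> smooth_on U B \<Longrightarrow> p \<in> U \<Longrightarrow> pdy (\<lambda>q. A q - B q) p = pdy A p - pdy B p"
proof -
  assume sA: "smooth_on U A" and sB: "smooth_on U B" and p: "p \<in> U"
  obtain x y where xy: "p = (x,y)" by (cases p)
  have "((\<lambda>t. A (x,t) - B (x,t)) has_real_derivative pdy A (x,y) - pdy B (x,y)) (at y)"
    by (rule DERIV_diff[OF has_dy[OF sA p[unfolded xy]] has_dy[OF sB p[unfolded xy]]])
  from DERIV_imp_deriv[OF this] show ?thesis unfolding xy pdy_def by simp
qed

lemma iter_add:
  assumes f: "smooth_on U f" and g: "smooth_on U g"
  shows "p \<in> U \<Longrightarrow> iter_pd ds (\<lambda>q. f q + g q) p = iter_pd ds f p + iter_pd ds g p"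
proof (induction ds arbitrary: p)
  case (Cons d ds)
  have U: "open U" using f smooth_open by blast
  have sf: "smooth_on U (iter_pd ds f)" and sg: "smooth_on U (iter_pd ds g)" using f g smooth_iter by auto
  show ?case
  proof (cases d)
    case True
    have "iter_pd (d#ds) (\<lambda>q. f q + g q) p = pdx (\<lambda>q. iter_pd ds f q + iter_pd ds g q) p"
      using True by (simp, intro pdx_local[OF U _ Cons.prems]) (use Cons in auto)
    then show ?thesis using True pdx_add[OF sf sg Cons.prems] by simp
  next
    case False
    have "iter_pd (d#ds) (\<lambda>q. f q + g q) p = pdy (\<lambda>q. iter_pd ds f q + iter_pd ds g q) p"
      using False by (simp, intro pdy_local[OF U _ Cons.prems]) (use Cons in auto)
    then show ?thesis using False pdy_add[OF sf sg Cons.prems] by simp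
  qed
qed simp

lemma iter_diff:
  assumes f: "smooth_on U f" and g: "smooth_on U g"
  shows "p \<in> U \<Longrightarrow> iter_pd ds (\<lambda>q. f q - g q) p = iter_pd ds f p - iter_pd ds g p"
proof (induction ds arbitrary: p)
  case (Cons d ds)
  have U: "open U" using f smooth_open by blast
  have sf: "smooth_on U (iter_pd ds f)" and sg: "smooth_on U (iter_pd ds g)" using f g smooth_iter by auto
  show ?case
  proof (cases d)
    case True
    have "iter_pd (d#ds) (\<lambda>q. f q - g q) p = pdx (\<lambda>q. iter_pd ds f q - iter_pd ds g q) p"
      using True by (simp, intro pdx_local[OF U _ Cons.prems]) (use Cons in auto)
    then show ?thesis using True pdx_diff[OF sf sg Cons.prems] by simp
  next
    case False
    have "iter_pd (d#ds) (\<lambda>q. f q - g q) p = pdy (\<lambda>q. iter_pd ds f q - iter_pd ds g q) p"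
      using False by (simp, intro pdy_local[OF U _ Cons.prems]) (use Cons in auto)
    then show ?thesis using False pdy_diff[OF sf sg Cons.prems] by simp
  qed
qed simp

lemma smooth_add: "smooth_on U f \<Longrightarrow> smooth_on U g \<Longrightarrow> smooth_on U (\<lambda>q. f q + g q)"
proof (rule smooth_via)
  assume f: "smooth_on U f" and g: "smooth_on U g"
  show "open U" using f smooth_open by blast
  fix ds
  have sf: "smooth_on U (iter_pd ds f)" and sg: "smooth_on U (iter_pd ds g)" using f g smooth_iter by auto
  show "\<exists>F. (\<forall>p\<in>U. iter_pd ds (\<lambda>q. f q + g q) p = F p) \<and> continuous_on U F \<and>
        (\<forall>x y. (x,y) \<in> U \<longrightarrow> (\<lambda>t. F (t,y)) differentiable (at x) \<and> (\<lambda>t. F (x,t)) differentiable (at y))"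
  proof (intro exI conjI allI impI ballI)
    show "iter_pd ds (\<lambda>q. f q + g q) p = iter_pd ds f p + iter_pd ds g p" if "p \<in> U" for p
      using iter_add[OF f g that] .
    show "continuous_on U (\<lambda>p. iter_pd ds f p + iter_pd ds g p)"
      by (intro continuous_on_add smooth_cont sf sg)
    fix x y assume p: "(x,y) \<in> U"
    show "(\<lambda>t. iter_pd ds f (t,y) + iter_pd ds g (t,y)) differentiable (at x)"
      using DERIV_add[OF has_dx[OF sf p] has_dx[OF sg p]] real_differentiable_def by blast
    show "(\<lambda>t. iter_pd ds f (x,t) + iter_pd ds g (x,t)) differentiable (at y)"
      using DERIV_add[OF has_dy[OF sf p] has_dy[OF sg p]] real_differentiable_def by blast
  qed
qed

lemma smooth_mult: "smooth_on U f \<Longrightarrow> smooth_on U g \<Longrightarrow> smooth_on U (\<lambda>q. f q * g q)"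
proof (rule smooth_via)
  assume f: "smooth_on U f" and g: "smooth_on U g"
  show "open U" using f smooth_open by blast
  fix ds
  show "\<exists>F. (\<forall>p\<in>U. iter_pd ds (\<lambda>q. f q * g q) p = F p) \<and> continuous_on U F \<and>
        (\<forall>x y. (x,y) \<in> U \<longrightarrow> (\<lambda>t. F (t,y)) differentiable (at x) \<and> (\<lambda>t. F (x,t)) differentiable (at y))"
  proof (intro exI conjI allI impI ballI)
    show "iter_pd ds (\<lambda>q. f q * g q) p = LB (cT ds) (cF ds) f g p" if "p \<in> U" for p
      using leibniz[OF f g that] .
    show "continuous_on U (LB (cT ds) (cF ds) f g)"
      unfolding LB_def[abs_def] by (intro continuous_intros smooth_cont smooth_Dxy f g)
    fix x y assume p: "(x,y) \<in> U"
    show "(\<lambda>t. LB (cT ds) (cF ds) f g (t,y)) differentiable (at x)"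
      using LB_dx[OF f g p] real_differentiable_def by blast
    show "(\<lambda>t. LB (cT ds) (cF ds) f g (x,t)) differentiable (at y)"
      using LB_dy[OF f g p] real_differentiable_def by blast
  qed
qed

lemma cT_app: "cT (xs @ ys) = cT xs + cT ys" by (simp add: cT_def)
lemma cF_app: "cF (xs @ ys) = cF xs + cF ys" by (simp add: cF_def)
lemma cT_rep: "cT (replicate i d) = (if d then i else 0)" by (induction i) auto
lemma cF_rep: "cF (replicate i d) = (if d then 0 else i)" by (induction i) auto

theorem corollary4p3:
  fixes h :: "real \<times> real \<Rightarrow> real" and U :: "(real \<times> real) set" and a b :: real
  assumes "open U" and "(0, 0) \<in> U" and "smooth_on U h"
    and "a > 0" and "b > 0"
    and "\<forall>p q. p \<in> \<rat> \<and> q \<in> \<rat> \<and> p * a + q * b = 0 \<longrightarrow> p = 0 \<and> q = 0"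
    and "h (0, 0) = 0"
    and "iter_pd [True] h (0, 0) = 0" and "iter_pd [False] h (0, 0) = 0"
    and "iter_pd [True, True] h (0, 0) = 2 * a\<^sup>2"
    and "iter_pd [True, False] h (0, 0) = 0"
    and "iter_pd [False, False] h (0, 0) = 2 * b\<^sup>2"
  shows "\<exists>V z. open V \<and> (0, 0) \<in> V \<and> smooth_on V z \<and>
           vanishes_to_infinite_order_at (\<lambda>p. (pdx z p)\<^sup>2 + (pdy z p)\<^sup>2 - h p) (0, 0)"
proof -
  note hs = assms(3)
  define H where "H m n = Dxy m n h (0,0)" for m n
  have "\<exists>c. \<forall>m n. Bil c c m n = H m n"
  proof (rule solve_coeffs[OF assms(4,5)])
    show "H 0 0 = 0" using assms(7) by (simp add: H_def)
    show "H 1 0 = 0" using assms(8) by (simp add: H_def Dxy_def)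
    show "H 0 1 = 0" using assms(9) by (simp add: H_def Dxy_def)
    show "H 2 0 = 2 * a^2" using assms(10) by (simp add: H_def Dxy_def numeral_2_eq_2)
    show "H 1 1 = 0" using assms(11) by (simp add: H_def Dxy_def)
    show "H 0 2 = 2 * b^2" using assms(12) by (simp add: H_def Dxy_def numeral_2_eq_2)
  qed
  then obtain c where c: "\<And>m n. Bil c c m n = H m n" by blast
  obtain z where zs: "smooth_on UNIV z" and zj: "\<And>ds. iter_pd ds z (0,0) = c (cT ds) (cF ds)"
    using borel[of c] by blast
  have zU: "smooth_on U z" using smooth_subset[OF zs assms(1)] by simp
  have zx: "smooth_on U (pdx z)" and zy: "smooth_on U (pdy z)" using zU smooth_pdx smooth_pdy by auto
  have jx: "Dxy i j (pdx z) (0,0) = c (Suc i) j" for i j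
  proof -
    have "Dxy i j (pdx z) = iter_pd (replicate i True @ replicate j False @ [True]) z"
      using iter_pd_append[of "replicate i True @ replicate j False" "[True]" z] by (simp add: Dxy_def)
    then show ?thesis by (simp add: zj cT_app cF_app cT_rep cF_rep)
  qed
  have jy: "Dxy i j (pdy z) (0,0) = c i (Suc j)" for i j
  proof -
    have "Dxy i j (pdy z) = iter_pd (replicate i True @ replicate j False @ [False]) z"
      using iter_pd_append[of "replicate i True @ replicate j False" "[False]" z] by (simp add: Dxy_def)
    then show ?thesis by (simp add: zj cT_app cF_app cT_rep cF_rep)
  qed
  show ?thesis
  proof (intro exI conjI)
    show "open U" "(0,0) \<in> U" "smooth_on U z" by (fact assms(1), fact assms(2), fact zU)
    show "vanishes_to_infinite_order_at (\<lambda>p. (pdx z p)\<^sup>2 + (pdy z p)\<^sup>2 - h p) (0, 0)"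
      unfolding vanishes_to_infinite_order_at_def
    proof
      fix ds
      let ?m = "cT ds" and ?n = "cF ds"
      have sxx: "smooth_on U (\<lambda>q. pdx z q * pdx z q)" by (rule smooth_mult[OF zx zx])
      have syy: "smooth_on U (\<lambda>q. pdy z q * pdy z q)" by (rule smooth_mult[OF zy zy])
      have ss: "smooth_on U (\<lambda>q. pdx z q * pdx z q + pdy z q * pdy z q)" by (rule smooth_add[OF sxx syy])
      have eq: "(\<lambda>p. (pdx z p)\<^sup>2 + (pdy z p)\<^sup>2 - h p) = (\<lambda>p. (pdx z p * pdx z p + pdy z p * pdy z p) - h p)"
        by (simp add: power2_eq_square)
      have "iter_pd ds (\<lambda>p. (pdx z p)\<^sup>2 + (pdy z p)\<^sup>2 - h p) (0,0)
          = iter_pd ds (\<lambda>q. pdx z q * pdx z q) (0,0) + iter_pd ds (\<lambda>q. pdy z q * pdy z q) (0,0) - iter_pd ds h (0,0)"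
        unfolding eq iter_diff[OF ss hs assms(2)] iter_add[OF sxx syy assms(2)] ..
      also have "\<dots> = LB ?m ?n (pdx z) (pdx z) (0,0) + LB ?m ?n (pdy z) (pdy z) (0,0) - H ?m ?n"
        unfolding leibniz[OF zx zx assms(2)] leibniz[OF zy zy assms(2)] H_def sym_iter[OF hs assms(2)] ..
      also have "LB ?m ?n (pdx z) (pdx z) (0,0) + LB ?m ?n (pdy z) (pdy z) (0,0) = Bil c c ?m ?n"
        unfolding LB_def Bil_def jx jy by (simp add: sum.distrib[symmetric] algebra_simps)
      finally show "iter_pd ds (\<lambda>p. (pdx z p)\<^sup>2 + (pdy z p)\<^sup>2 - h p) (0,0) = 0" using c by simp
    qed
  qed
qed


end
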